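(* Let $\nu>2$ be fixed, let $G$ be a chordal graph (information filtering network) on $\{1,\dots,p\}$ with clique-forest structure given by cliques $\mathcal C$ and separators $\mathcal S$, and let $\hat{\mathbf x}(s)\in\mathbb R^p$, $s=1,\dots,q$, be observations. Consider the multivariate Student-t log-likelihood $$\ell(\boldsymbol\mu,\mathbf J,\nu)=q\log\!\left(\frac{\Gamma(\frac{\nu+p}{2})}{(\nu-2)^{p/2}\pi^{p/2}\Gamma(\frac\nu2)}\right)+\frac q2\log|\mathbf J|-\frac{\nu+p}{2}\sum_{s=1}^q\log\!\left(1+\frac{1}{\nu-2}d^2_{\hat{\mathbf x}(s)}\right),$$ $d^2_{\hat{\mathbf x}(s)}=(\hat{\mathbf x}(s)-\boldsymbol\mu)^\top\mathbf J(\hat{\mathbf x}(s)-\boldsymbol\mu)$, over $\boldsymbol\mu\in\mathbb R^p$ and symmetric positive definite $\mathbf J$ whose off-diagonal entries may be non-zero only at edges of $G$. Let $(\boldsymbol\mu^*,\mathbf J^* )$ be the maximum likelihood solution, let $d^{*2}_{\hat{\mathbf x}(s)}=(\hat{\mathbf x}(s)-\boldsymbol\mu^* )^\top\mathbf J^*(\hat{\mathbf x}(s)-\boldsymbol\mu^* )$ and $w_s^*=\dfrac{\nu+p}{\nu+\frac{\nu}{\nu-2}d^{*2}_{\hat{\mathbf x}(s)}}$. Then $$J^*_{i,j}=\sum_{c\in\mathcal C}\big(\boldsymbol\Sigma_c^{*-1}\big)_{i,j}-\sum_{s\in\mathcal S}\big(\boldsymbol\Sigma_s^{*-1}\big)_{i,j}$$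 when $i,j$ are an edge of a clique (or $i=j$), and $J^*_{i,j}=0$ for all other pairs, where $\boldsymbol\Sigma^*_c,\boldsymbol\Sigma^*_s$ are the restrictions to the variables in $c$, respectively $s$, of the weighted covariance matrix $$\boldsymbol\Sigma^*_{i,j}=\frac{\nu}{\nu-2}\,\frac1q\sum_{s=1}^q w_s^*\,(\hat x_i(s)-\mu_i^* )(\hat x_j(s)-\mu_j^* ).$$
   Context: A clique forest (junction tree) of a chordal graph has as nodes the cliques $c\in\mathcal C$ and as links the separators $s\in\mathcal S$, each separator being the intersection of two adjacent cliques. For a subset $a$ of variables, $(\boldsymbol\Sigma_a^{*-1})_{i,j}$ denotes the entry of the inverse of the $|a|\times|a|$ matrix $\boldsymbol\Sigma^*_a$ for variables $i,j\in a$, and $0$ if $i\notin a$ or $j\notin a$. $\mathbf J$ is the inverse covariance of the Student-t distribution with $\nu>2$ degrees of freedom. *)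

theory Defs
  imports "HOL-Analysis.Analysis"
begin

definition simple_graph :: "('n \<Rightarrow> 'n \<Rightarrow> bool) \<Rightarrow> bool" where
  "simple_graph E \<longleftrightarrow> (\<forall>i j. E i j \<longrightarrow> E j i) \<and> (\<forall>i. \<not> E i i)"

definition chordal :: "('n \<Rightarrow> 'n \<Rightarrow> bool) \<Rightarrow> bool" where
  "chordal E \<longleftrightarrow>
     (\<forall>vs. 4 \<le> length vs \<and> distinct vs \<and>
        (\<forall>k < length vs. E (vs ! k) (vs ! ((k + 1) mod length vs))) \<longrightarrow>
        (\<exists>k l. k < length vs \<and> l < length vs \<and> k \<noteq> l \<and>
           l \<noteq> (k + 1) mod length vs \<and> k \<noteq> (l + 1) mod length vs \<and>
           E (vs ! k) (vs ! l)))"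

definition is_clique :: "('n \<Rightarrow> 'n \<Rightarrow> bool) \<Rightarrow> 'n set \<Rightarrow> bool" where
  "is_clique E K \<longleftrightarrow> K \<noteq> {} \<and> (\<forall>i\<in>K. \<forall>j\<in>K. i \<noteq> j \<longrightarrow> E i j)"

definition max_cliques :: "('n \<Rightarrow> 'n \<Rightarrow> bool) \<Rightarrow> 'n set set" where
  "max_cliques E = {K. is_clique E K \<and> (\<forall>K'. is_clique E K' \<and> K \<subseteq> K' \<longrightarrow> K' = K)}"

definition connected_in :: "'a set set \<Rightarrow> 'a set \<Rightarrow> 'a \<Rightarrow> 'a \<Rightarrow> bool" where
  "connected_in F N a b \<longleftrightarrow> (a, b) \<in> {(x, y). {x, y} \<in> F \<and> x \<in> N \<and> y \<in> N}\<^sup>*"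

text \<open>A forest: every edge is a bridge (equivalently: no cycles).\<close>
definition is_forest :: "'a set set \<Rightarrow> bool" where
  "is_forest F \<longleftrightarrow> (\<forall>e\<in>F. \<forall>x y. e = {x, y} \<longrightarrow> \<not> connected_in (F - {e}) UNIV x y)"

text \<open>The separators are the intersections of adjacent cliques, i.e. \<open>\<Inter> e\<close> for e \<in> F
  (counted with multiplicity, one per link).\<close>
definition clique_forest :: "('n \<Rightarrow> 'n \<Rightarrow> bool) \<Rightarrow> 'n set set set \<Rightarrow> bool" where
  "clique_forest E F \<longleftrightarrow>
     (\<forall>e\<in>F. \<exists>c c'. e = {c, c'} \<and> c \<noteq> c' \<and> c \<in> max_cliques E \<and> c' \<in> max_cliques E) \<and>
     is_forest F \<and>
     (\<forall>v. \<forall>c\<in>max_cliques E. \<forall>c'\<in>max_cliques E. v \<in> c \<and> v \<in> c' \<longrightarrow>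
         connected_in F {d \<in> max_cliques E. v \<in> d} c c')"

definition pos_def :: "real^'n^'n \<Rightarrow> bool" where
  "pos_def J \<longleftrightarrow> (\<forall>x. x \<noteq> 0 \<longrightarrow> x \<bullet> (J *v x) > 0)"

definition symmetric_mat :: "real^'n^'n \<Rightarrow> bool" where
  "symmetric_mat J \<longleftrightarrow> transpose J = J"

definition admissible :: "('n \<Rightarrow> 'n \<Rightarrow> bool) \<Rightarrow> real^'n^'n \<Rightarrow> bool" where
  "admissible E J \<longleftrightarrow> symmetric_mat J \<and> pos_def J \<and>
     (\<forall>i j. i \<noteq> j \<and> \<not> E i j \<longrightarrow> J $ i $ j = 0)"

definition mahal2 :: "real^'n^'n \<Rightarrow> real^'n \<Rightarrow> real^'n \<Rightarrow> real" where
  "mahal2 J \<mu> x = (x - \<mu>) \<bullet> (J *v (x - \<mu>))"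

definition loglik_t :: "real \<Rightarrow> nat \<Rightarrow> (nat \<Rightarrow> real^'n) \<Rightarrow> real^'n \<Rightarrow> real^'n^'n \<Rightarrow> real" where
  "loglik_t \<nu> q x \<mu> J =
     (let p = real CARD('n) in
      real q * ln (Gamma ((\<nu> + p) / 2) /
        ((\<nu> - 2) powr (p / 2) * pi powr (p / 2) * Gamma (\<nu> / 2)))
      + real q / 2 * ln (det J)
      - (\<nu> + p) / 2 * (\<Sum>s = 1..q. ln (1 + mahal2 J \<mu> (x s) / (\<nu> - 2))))"

definition t_weight :: "real \<Rightarrow> real^'n^'n \<Rightarrow> real^'n \<Rightarrow> real^'n \<Rightarrow> real" where
  "t_weight \<nu> J \<mu> x = (\<nu> + real CARD('n)) / (\<nu> + \<nu> / (\<nu> - 2) * mahal2 J \<mu> x)"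

definition wcov :: "real \<Rightarrow> nat \<Rightarrow> (nat \<Rightarrow> real^'n) \<Rightarrow> real^'n \<Rightarrow> real^'n^'n \<Rightarrow> real^'n^'n" where
  "wcov \<nu> q x \<mu> J = (\<chi> i j. \<nu> / (\<nu> - 2) * (1 / real q) *
      (\<Sum>s = 1..q. t_weight \<nu> J \<mu> (x s) * (x s $ i - \<mu> $ i) * (x s $ j - \<mu> $ j)))"

text \<open>\<open>restr_inv M a i j\<close>: entry (i,j) of the inverse of the principal submatrix \<open>M_a\<close>
  (the unique B on a\<times>a with \<open>M_a B = I\<close>), and 0 if i \<notin> a or j \<notin> a.\<close>
definition restr_inv :: "real^'n^'n \<Rightarrow> 'n set \<Rightarrow> 'n \<Rightarrow> 'n \<Rightarrow> real" where
  "restr_inv M a i j =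
     (if i \<in> a \<and> j \<in> a then
        (THE B. (\<forall>k\<in>a. \<forall>l\<in>a. (\<Sum>m\<in>a. M $ k $ m * B m l) = (if k = l then 1 else 0)) \<and>
                (\<forall>k l. k \<notin> a \<or> l \<notin> a \<longrightarrow> B k l = 0)) i j
      else 0)"

end

theory Submission
  imports Defs
begin


definition isinv :: "'n::finite set \<Rightarrow> ('n \<Rightarrow> 'n \<Rightarrow> real) \<Rightarrow> ('n \<Rightarrow> 'n \<Rightarrow> real) \<Rightarrow> bool" where
  "isinv W M B \<longleftrightarrow> (\<forall>k\<in>W. \<forall>l\<in>W. (\<Sum>m\<in>W. M k m * B m l) = (if k = l then 1 else 0)) \<and>
     (\<forall>k l. k \<notin> W \<or> l \<notin> W \<longrightarrow> B k l = 0)"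

definition RI :: "('n::finite \<Rightarrow> 'n \<Rightarrow> real) \<Rightarrow> 'n set \<Rightarrow> 'n \<Rightarrow> 'n \<Rightarrow> real" where
  "RI M W = (THE B. isinv W M B)"

definition pdon :: "'n::finite set \<Rightarrow> ('n \<Rightarrow> 'n \<Rightarrow> real) \<Rightarrow> bool" where
  "pdon V M \<longleftrightarrow> (\<forall>z. (\<forall>i. i \<notin> V \<longrightarrow> z i = 0) \<longrightarrow> (\<exists>i. z i \<noteq> 0) \<longrightarrow>
      (\<Sum>k\<in>V. \<Sum>m\<in>V. z k * M k m * z m) > 0)"

lemma restr_inv_RI: "restr_inv M a i j = (if i \<in> a \<and> j \<in> a then RI (\<lambda>k l. M$k$l) a i j else 0)"
  by (simp add: restr_inv_def RI_def isinv_def)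

lemma pd_unique:
  assumes pd: "pdon W M" and B1: "isinv W M B1" and B2: "isinv W M B2"
  shows "B1 = B2"
proof (rule ext, rule ext)
  fix r l
  show "B1 r l = B2 r l"
  proof (cases "l \<in> W")
    case False thus ?thesis using B1 B2 by (simp add: isinv_def)
  next
    case True
    define z where "z = (\<lambda>m. B1 m l - B2 m l)"
    have zs: "\<forall>i. i \<notin> W \<longrightarrow> z i = 0" using B1 B2 by (simp add: isinv_def z_def)
    have Mz: "(\<Sum>m\<in>W. M k m * z m) = 0" if "k \<in> W" for k
    proof -
      have "(\<Sum>m\<in>W. M k m * z m) = (\<Sum>m\<in>W. M k m * B1 m l) - (\<Sum>m\<in>W. M k m * B2 m l)"
        by (simp add: z_def right_diff_distrib sum_subtractf)
      thus ?thesis using B1 B2 that True by (simp add: isinv_def)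
    qed
    have "(\<Sum>k\<in>W. \<Sum>m\<in>W. z k * M k m * z m) = (\<Sum>k\<in>W. z k * (\<Sum>m\<in>W. M k m * z m))"
      by (simp add: sum_distrib_left mult.assoc)
    also have "\<dots> = 0" using Mz by simp
    finally have "\<not> (\<Sum>k\<in>W. \<Sum>m\<in>W. z k * M k m * z m) > 0" by simp
    then have "\<not> (\<exists>i. z i \<noteq> 0)" using pd zs unfolding pdon_def by blast
    thus ?thesis by (simp add: z_def)
  qed
qed

lemma pd_exists:
  fixes M :: "'n::finite \<Rightarrow> 'n \<Rightarrow> real"
  assumes pd: "pdon W M"
  shows "\<exists>B. isinv W M B"
proof -
  define A :: "real^'n^'n" where "A = (\<chi> i j. if i \<in> W \<and> j \<in> W then M i j else if i = j then 1 else 0)"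
  have Av: "(A *v x)$i = (if i \<in> W then (\<Sum>j\<in>W. M i j * x$j) else x$i)" for x i
  proof (cases "i \<in> W")
    case True
    have "(A *v x)$i = (\<Sum>j\<in>UNIV. (if j \<in> W then M i j * x$j else 0))"
      using True by (auto simp: A_def matrix_vector_mult_def intro!: sum.cong)
    also have "\<dots> = (\<Sum>j\<in>W. M i j * x$j)" by (simp add: sum.If_cases)
    finally show ?thesis using True by simp
  next
    case False
    have "(A *v x)$i = (\<Sum>j\<in>UNIV. (if i = j then 1 else 0) * x$j)"
      using False by (auto simp: A_def matrix_vector_mult_def intro!: sum.cong)
    also have "\<dots> = (\<Sum>j\<in>UNIV. (if i = j then x$j else 0))"
      by (rule sum.cong) auto
    finally show ?thesis using False by simp
  qed
  have inj0: "x = 0" if "A *v x = 0" for x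
  proof -
    have out: "x$i = 0" if "i \<notin> W" for i
    proof -
      have "(A *v x)$i = x$i" using Av[of x i] that by simp
      then show ?thesis using \<open>A *v x = 0\<close> by simp
    qed
    define z where "z = (\<lambda>i. x$i)"
    have zs: "\<forall>i. i \<notin> W \<longrightarrow> z i = 0" using out z_def by simp
    have "(\<Sum>k\<in>W. \<Sum>m\<in>W. z k * M k m * z m) = (\<Sum>k\<in>W. z k * (\<Sum>m\<in>W. M k m * z m))"
      by (simp add: sum_distrib_left mult.assoc)
    also have "\<dots> = 0"
    proof (rule sum.neutral, rule ballI)
      fix k assume k: "k \<in> W"
      have "(A *v x)$k = (\<Sum>m\<in>W. M k m * z m)" using Av[of x k] k by (simp add: z_def)
      then show "z k * (\<Sum>m\<in>W. M k m * z m) = 0" using \<open>A *v x = 0\<close> by simp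
    qed
    finally have "\<not> (\<Sum>k\<in>W. \<Sum>m\<in>W. z k * M k m * z m) > 0" by simp
    then have "\<not> (\<exists>i. z i \<noteq> 0)" using pd zs unfolding pdon_def by blast
    thus ?thesis by (simp add: z_def vec_eq_iff)
  qed
  have "inj ((*v) A)"
  proof (rule injI)
    fix x y assume "A *v x = A *v y"
    then have "A *v (x - y) = 0" by (simp add: matrix_vector_mult_diff_distrib)
    from inj0[OF this] show "x = y" by simp
  qed
  then obtain B where "B ** A = mat 1" using matrix_left_invertible_injective by blast
  then have AB: "A ** B = mat 1" using matrix_left_right_inverse by blast
  define Bf where "Bf = (\<lambda>k l. if k \<in> W \<and> l \<in> W then B$k$l else 0)"
  have "isinv W M Bf"
    unfolding isinv_def
  proof (intro conjI ballI allI impI)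
    fix k l assume k: "k \<in> W" and l: "l \<in> W"
    have "(\<Sum>m\<in>W. M k m * Bf m l) = (\<Sum>m\<in>UNIV. A$k$m * B$m$l)"
      by (rule sum.mono_neutral_cong_left) (use k l in \<open>auto simp: A_def Bf_def\<close>)
    also have "\<dots> = (A ** B)$k$l" by (simp add: matrix_matrix_mult_def)
    finally show "(\<Sum>m\<in>W. M k m * Bf m l) = (if k = l then 1 else 0)" using AB by (simp add: mat_def)
  next
    fix k l assume "k \<notin> W \<or> l \<notin> W" thus "Bf k l = 0" by (auto simp: Bf_def)
  qed
  thus ?thesis by blast
qed

lemma RI_isinv: assumes "pdon W M" shows "isinv W M (RI M W)"
proof -
  obtain B where B: "isinv W M B" using pd_exists[OF assms] by blast
  show ?thesis unfolding RI_def by (rule theI[of _ B]) (use B pd_unique[OF assms] in auto)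
qed

lemma RI_eq: "pdon W M \<Longrightarrow> isinv W M B \<Longrightarrow> RI M W = B"
  using RI_isinv pd_unique by blast

lemma RI_supp: "pdon W M \<Longrightarrow> k \<notin> W \<or> l \<notin> W \<Longrightarrow> RI M W k l = 0"
  using RI_isinv unfolding isinv_def by blast

lemma RI_right: "pdon W M \<Longrightarrow> k \<in> W \<Longrightarrow> l \<in> W \<Longrightarrow> (\<Sum>m\<in>W. M k m * RI M W m l) = (if k = l then 1 else 0)"
  using RI_isinv unfolding isinv_def by blast

lemma pdon_mono:
  fixes M :: "'n::finite \<Rightarrow> 'n \<Rightarrow> real"
  assumes "pdon V M" "W \<subseteq> V" shows "pdon W M"
  unfolding pdon_def
proof (intro allI impI)
  fix z :: "'n \<Rightarrow> real" assume z: "\<forall>i. i \<notin> W \<longrightarrow> z i = 0" "\<exists>i. z i \<noteq> 0"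
  have zV: "\<forall>i. i \<notin> V \<longrightarrow> z i = 0" using z assms(2) by blast
  have "(\<Sum>k\<in>V. \<Sum>m\<in>V. z k * M k m * z m) = (\<Sum>k\<in>W. \<Sum>m\<in>W. z k * M k m * z m)"
  proof (rule sum.mono_neutral_cong_right)
    show "\<forall>i\<in>V - W. (\<Sum>m\<in>V. z i * M i m * z m) = 0" using z by simp
    show "(\<Sum>m\<in>V. z k * M k m * z m) = (\<Sum>m\<in>W. z k * M k m * z m)" if "k \<in> W" for k
      by (rule sum.mono_neutral_cong_right) (use z assms(2) in auto)
  qed (use assms(2) in auto)
  thus "(\<Sum>k\<in>W. \<Sum>m\<in>W. z k * M k m * z m) > 0" using assms(1) zV z(2) unfolding pdon_def by auto
qed

lemma pdon_inv:
  fixes M :: "'n::finite \<Rightarrow> 'n \<Rightarrow> real"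
  assumes pd: "pdon V M" and X: "isinv V M X" shows "pdon V X"
  unfolding pdon_def
proof (intro allI impI)
  fix z :: "'n \<Rightarrow> real" assume zs: "\<forall>i. i\<notin>V \<longrightarrow> z i = 0" and nz: "\<exists>i. z i \<noteq> 0"
  define y where "y = (\<lambda>k. if k \<in> V then (\<Sum>l\<in>V. X k l * z l) else 0)"
  have My: "(\<Sum>m\<in>V. M k m * y m) = z k" if "k\<in>V" for k
  proof -
    have "(\<Sum>m\<in>V. M k m * y m) = (\<Sum>m\<in>V. \<Sum>l\<in>V. M k m * X m l * z l)"
      by (simp add: y_def sum_distrib_left mult.assoc)
    also have "\<dots> = (\<Sum>l\<in>V. (\<Sum>m\<in>V. M k m * X m l) * z l)"
      by (subst sum.swap) (simp add: sum_distrib_right)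
    also have "\<dots> = (\<Sum>l\<in>V. (if k = l then 1 else 0) * z l)" using X that by (simp add: isinv_def)
    also have "\<dots> = (\<Sum>l\<in>V. if k = l then z l else 0)" by (rule sum.cong) auto
    also have "\<dots> = z k" using that by simp
    finally show ?thesis .
  qed
  have ys: "\<forall>i. i\<notin>V \<longrightarrow> y i = 0" by (simp add: y_def)
  have ynz: "\<exists>i. y i \<noteq> 0"
  proof (rule ccontr)
    assume "\<not> ?thesis" then have y0: "\<And>i. y i = 0" by auto
    obtain i where zi: "z i \<noteq> 0" using nz by blast
    then have "i \<in> V" using zs by blast
    from My[OF this] y0 zi show False by simp
  qed
  have "(\<Sum>k\<in>V. \<Sum>m\<in>V. z k * X k m * z m) = (\<Sum>k\<in>V. z k * y k)"
    by (rule sum.cong[OF refl]) (simp add: y_def sum_distrib_left mult.assoc)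
  also have "\<dots> = (\<Sum>k\<in>V. (\<Sum>m\<in>V. M k m * y m) * y k)" using My by simp
  also have "\<dots> = (\<Sum>k\<in>V. \<Sum>m\<in>V. y k * M k m * y m)"
    by (rule sum.cong[OF refl], simp add: sum_distrib_right sum_distrib_left, rule sum.cong[OF refl], simp)
  also have "\<dots> > 0" using pd ys ynz unfolding pdon_def by blast
  finally show "(\<Sum>k\<in>V. \<Sum>m\<in>V. z k * X k m * z m) > 0" .
qed

lemma pdon_RI: "pdon V M \<Longrightarrow> pdon V (RI M V)"
  using pdon_inv RI_isinv by blast

lemma sum_swap3:
  fixes f g :: "_ \<Rightarrow> _ \<Rightarrow> real"
  shows "(\<Sum>p\<in>P. \<Sum>n\<in>N. (\<Sum>m\<in>M. f m p) * g p n) = (\<Sum>m\<in>M. \<Sum>p\<in>P. \<Sum>n\<in>N. f m p * g p n)"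
proof -
  have "(\<Sum>p\<in>P. \<Sum>n\<in>N. (\<Sum>m\<in>M. f m p) * g p n) = (\<Sum>p\<in>P. \<Sum>n\<in>N. \<Sum>m\<in>M. f m p * g p n)"
    by (rule sum.cong[OF refl], rule sum.cong[OF refl], rule sum_distrib_right)
  also have "\<dots> = (\<Sum>p\<in>P. \<Sum>m\<in>M. \<Sum>n\<in>N. f m p * g p n)"
    by (rule sum.cong[OF refl], rule sum.swap)
  also have "\<dots> = (\<Sum>m\<in>M. \<Sum>p\<in>P. \<Sum>n\<in>N. f m p * g p n)"
    by (rule sum.swap)
  finally show ?thesis .
qed

lemma schur:
  fixes K :: "'n::finite \<Rightarrow> 'n \<Rightarrow> real"
  assumes pd: "pdon V K" and WV: "W \<subseteq> V"
  shows "RI K W = (\<lambda>a b. if a \<in> W \<and> b \<in> W then RI K V a b -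
     (\<Sum>p\<in>V-W. \<Sum>n\<in>V-W. RI K V a p * RI (RI K V) (V-W) p n * RI K V n b) else 0)"
proof -
  define J where "J = RI K V"
  define U where "U = V - W"
  define Y where "Y = RI J U"
  have KJ: "\<And>k l. k \<in> V \<Longrightarrow> l \<in> V \<Longrightarrow> (\<Sum>m\<in>V. K k m * J m l) = (if k = l then 1 else 0)"
    using RI_right[OF pd] J_def by simp
  have pdJ: "pdon U J" using pdon_mono[OF pdon_RI[OF pd]] J_def U_def by auto
  have JY: "\<And>k l. k \<in> U \<Longrightarrow> l \<in> U \<Longrightarrow> (\<Sum>m\<in>U. J k m * Y m l) = (if k = l then 1 else 0)"
    using RI_right[OF pdJ] Y_def by simp
  have VWU: "V = W \<union> U" "W \<inter> U = {}" using WV U_def by auto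
  define X where "X = (\<lambda>a b. if a \<in> W \<and> b \<in> W then J a b -
     (\<Sum>p\<in>U. \<Sum>n\<in>U. J a p * Y p n * J n b) else 0)"
  have "isinv W K X"
    unfolding isinv_def
  proof (intro conjI ballI allI impI)
    fix k l assume k: "k \<in> W" and l: "l \<in> W"
    have A: "(\<Sum>m\<in>W. K k m * J m p) = - (\<Sum>m\<in>U. K k m * J m p)" if p: "p \<in> U" for p
    proof -
      have "(\<Sum>m\<in>V. K k m * J m p) = 0" using KJ[of k p] k p VWU by auto
      moreover have "(\<Sum>m\<in>V. K k m * J m p) = (\<Sum>m\<in>W. K k m * J m p) + (\<Sum>m\<in>U. K k m * J m p)"
        using VWU by (simp add: sum.union_disjoint)
      ultimately show ?thesis by simp
    qed
    have B: "(\<Sum>m\<in>W. K k m * (\<Sum>p\<in>U. \<Sum>n\<in>U. J m p * Y p n * J n l)) = - (\<Sum>m\<in>U. K k m * J m l)"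
    proof -
      have "(\<Sum>m\<in>W. K k m * (\<Sum>p\<in>U. \<Sum>n\<in>U. J m p * Y p n * J n l))
          = (\<Sum>m\<in>W. \<Sum>p\<in>U. \<Sum>n\<in>U. (K k m * J m p) * (Y p n * J n l))"
        by (simp add: sum_distrib_left mult.assoc)
      also have "\<dots> = (\<Sum>p\<in>U. \<Sum>n\<in>U. (\<Sum>m\<in>W. K k m * J m p) * (Y p n * J n l))"
        by (rule sum_swap3[symmetric])
      also have "\<dots> = (\<Sum>p\<in>U. \<Sum>n\<in>U. (- (\<Sum>m\<in>U. K k m * J m p)) * (Y p n * J n l))"
        using A by simp
      also have "\<dots> = - (\<Sum>p\<in>U. \<Sum>n\<in>U. (\<Sum>m\<in>U. K k m * J m p) * (Y p n * J n l))"
        by (simp add: sum_negf)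
      also have "(\<Sum>p\<in>U. \<Sum>n\<in>U. (\<Sum>m\<in>U. K k m * J m p) * (Y p n * J n l))
          = (\<Sum>m\<in>U. \<Sum>p\<in>U. \<Sum>n\<in>U. (K k m * J m p) * (Y p n * J n l))"
        by (rule sum_swap3)
      also have "\<dots> = (\<Sum>m\<in>U. K k m * (\<Sum>n\<in>U. (\<Sum>p\<in>U. J m p * Y p n) * J n l))"
      proof (rule sum.cong[OF refl])
        fix m assume "m \<in> U"
        have "(\<Sum>p\<in>U. \<Sum>n\<in>U. (K k m * J m p) * (Y p n * J n l)) = (\<Sum>n\<in>U. \<Sum>p\<in>U. (K k m * J m p) * (Y p n * J n l))"
          by (rule sum.swap)
        also have "\<dots> = K k m * (\<Sum>n\<in>U. (\<Sum>p\<in>U. J m p * Y p n) * J n l)"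
          by (simp add: sum_distrib_left sum_distrib_right mult.assoc)
        finally show "(\<Sum>p\<in>U. \<Sum>n\<in>U. (K k m * J m p) * (Y p n * J n l)) = K k m * (\<Sum>n\<in>U. (\<Sum>p\<in>U. J m p * Y p n) * J n l)" .
      qed
      also have "\<dots> = (\<Sum>m\<in>U. K k m * J m l)"
      proof (rule sum.cong[OF refl])
        fix m assume m: "m \<in> U"
        have "(\<Sum>n\<in>U. (\<Sum>p\<in>U. J m p * Y p n) * J n l) = (\<Sum>n\<in>U. if m = n then J n l else 0)"
          by (rule sum.cong[OF refl]) (simp add: JY m)
        also have "\<dots> = J m l" using m by simp
        finally show "K k m * (\<Sum>n\<in>U. (\<Sum>p\<in>U. J m p * Y p n) * J n l) = K k m * J m l" by simp
      qed
      finally show ?thesis .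
    qed
    have "(\<Sum>m\<in>W. K k m * X m l) = (\<Sum>m\<in>W. K k m * J m l - K k m * (\<Sum>p\<in>U. \<Sum>n\<in>U. J m p * Y p n * J n l))"
      by (rule sum.cong[OF refl]) (simp add: X_def l right_diff_distrib)
    also have "\<dots> = (\<Sum>m\<in>W. K k m * J m l) + (\<Sum>m\<in>U. K k m * J m l)"
      by (simp add: sum_subtractf B)
    also have "\<dots> = (\<Sum>m\<in>V. K k m * J m l)" using VWU by (simp add: sum.union_disjoint)
    also have "\<dots> = (if k = l then 1 else 0)" using KJ[of k l] k l WV by blast
    finally show "(\<Sum>m\<in>W. K k m * X m l) = (if k = l then 1 else 0)" .
  next
    fix k l assume "k \<notin> W \<or> l \<notin> W" thus "X k l = 0" by (auto simp: X_def)
  qed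
  then have "RI K W = X" using RI_eq pdon_mono[OF pd WV] by blast
  thus ?thesis unfolding X_def Y_def U_def J_def .
qed

lemma blockdiag:
  fixes J :: "'n::finite \<Rightarrow> 'n \<Rightarrow> real"
  assumes pd: "pdon (A \<union> B) J" and dis: "A \<inter> B = {}"
    and z1: "\<forall>a\<in>A. \<forall>b\<in>B. J a b = 0" and z2: "\<forall>a\<in>A. \<forall>b\<in>B. J b a = 0"
  shows "RI J (A \<union> B) = (\<lambda>a b. RI J A a b + RI J B a b)"
proof -
  have pA: "pdon A J" and pB: "pdon B J" using pdon_mono[OF pd] by auto
  define YA where "YA = RI J A"
  define YB where "YB = RI J B"
  have sA: "\<And>k l. k \<notin> A \<or> l \<notin> A \<Longrightarrow> YA k l = 0" using RI_supp[OF pA] YA_def by simp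
  have sB: "\<And>k l. k \<notin> B \<or> l \<notin> B \<Longrightarrow> YB k l = 0" using RI_supp[OF pB] YB_def by simp
  have rA: "\<And>k l. k \<in> A \<Longrightarrow> l \<in> A \<Longrightarrow> (\<Sum>m\<in>A. J k m * YA m l) = (if k = l then 1 else 0)"
    using RI_right[OF pA] YA_def by simp
  have rB: "\<And>k l. k \<in> B \<Longrightarrow> l \<in> B \<Longrightarrow> (\<Sum>m\<in>B. J k m * YB m l) = (if k = l then 1 else 0)"
    using RI_right[OF pB] YB_def by simp
  have "isinv (A \<union> B) J (\<lambda>a b. YA a b + YB a b)"
    unfolding isinv_def
  proof (intro conjI ballI allI impI)
    fix k l assume k: "k \<in> A \<union> B" and l: "l \<in> A \<union> B"
    have "(\<Sum>m\<in>A \<union> B. J k m * (YA m l + YB m l)) =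
        (\<Sum>m\<in>A. J k m * (YA m l + YB m l)) + (\<Sum>m\<in>B. J k m * (YA m l + YB m l))"
      using dis by (simp add: sum.union_disjoint)
    also have "\<dots> = (\<Sum>m\<in>A. J k m * YA m l) + (\<Sum>m\<in>B. J k m * YB m l)"
    proof -
      have "(\<Sum>m\<in>A. J k m * (YA m l + YB m l)) = (\<Sum>m\<in>A. J k m * YA m l)"
        by (rule sum.cong[OF refl]) (use dis sB in auto)
      moreover have "(\<Sum>m\<in>B. J k m * (YA m l + YB m l)) = (\<Sum>m\<in>B. J k m * YB m l)"
        by (rule sum.cong[OF refl]) (use dis sA in auto)
      ultimately show ?thesis by simp
    qed
    also have "\<dots> = (if k = l then 1 else 0)"
    proof (cases "k \<in> A")
      case kA: True
      have 2: "(\<Sum>m\<in>B. J k m * YB m l) = 0" by (rule sum.neutral) (use z1 kA in auto)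
      show ?thesis
      proof (cases "l \<in> A")
        case True thus ?thesis using rA kA 2 by simp
      next
        case False
        then have "(\<Sum>m\<in>A. J k m * YA m l) = 0" by (intro sum.neutral) (simp add: sA)
        thus ?thesis using 2 kA False by auto
      qed
    next
      case kB: False
      then have kB': "k \<in> B" using k by auto
      have 1: "(\<Sum>m\<in>A. J k m * YA m l) = 0" by (rule sum.neutral) (use z2 kB' in auto)
      show ?thesis
      proof (cases "l \<in> B")
        case True thus ?thesis using rB kB' 1 by simp
      next
        case False
        then have "(\<Sum>m\<in>B. J k m * YB m l) = 0" by (intro sum.neutral) (simp add: sB)
        thus ?thesis using 1 kB' False by auto
      qed
    qed
    finally show "(\<Sum>m\<in>A \<union> B. J k m * (YA m l + YB m l)) = (if k = l then 1 else 0)" .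
  next
    fix k l assume "k \<notin> A \<union> B \<or> l \<notin> A \<union> B" thus "YA k l + YB k l = 0" using sA sB by auto
  qed
  thus ?thesis using RI_eq[OF pd] YA_def YB_def by blast
qed

lemma sum_restrict2:
  fixes Y :: "'n::finite \<Rightarrow> 'n \<Rightarrow> real"
  assumes "A \<subseteq> S" and "\<And>p n. p \<notin> A \<or> n \<notin> A \<Longrightarrow> Y p n = 0"
  shows "(\<Sum>p\<in>S. \<Sum>n\<in>S. f p * Y p n * g n) = (\<Sum>p\<in>A. \<Sum>n\<in>A. f p * Y p n * g n)"
proof (rule sum.mono_neutral_cong_right)
  show "\<forall>i\<in>S - A. (\<Sum>n\<in>S. f i * Y i n * g n) = 0" using assms(2) by auto
  show "(\<Sum>n\<in>S. f p * Y p n * g n) = (\<Sum>n\<in>A. f p * Y p n * g n)" if "p \<in> A" for p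
    by (rule sum.mono_neutral_cong_right) (use assms in auto)
qed (use assms in auto)

lemma split_formula:
  fixes K :: "'n::finite \<Rightarrow> 'n \<Rightarrow> real"
  assumes pd: "pdon V K" and V: "V = V1 \<union> V2"
    and z1: "\<forall>a\<in>V1-V2. \<forall>b\<in>V2-V1. RI K V a b = 0"
    and z2: "\<forall>a\<in>V1-V2. \<forall>b\<in>V2-V1. RI K V b a = 0"
  shows "\<forall>a\<in>V. \<forall>b\<in>V. RI K V a b = RI K V1 a b + RI K V2 a b - RI K (V1 \<inter> V2) a b"
    and "\<forall>a\<in>V1. \<forall>b\<in>V1. \<not>(a \<in> V2 \<and> b \<in> V2) \<longrightarrow> RI K V1 a b = RI K V a b"
    and "\<forall>a\<in>V2. \<forall>b\<in>V2. \<not>(a \<in> V1 \<and> b \<in> V1) \<longrightarrow> RI K V2 a b = RI K V a b"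
proof -
  define J where "J = RI K V"
  define A where "A = V1 - V2"
  define B where "B = V2 - V1"
  have pdJ: "pdon V J" using pdon_RI[OF pd] J_def by simp
  have "A \<union> B \<subseteq> V" using V A_def B_def by auto
  then have pAB: "pdon (A \<union> B) J" using pdon_mono[OF pdJ] by blast
  have pA: "pdon A J" and pB: "pdon B J" using pdon_mono[OF pAB] by auto
  define YA where "YA = RI J A"
  define YB where "YB = RI J B"
  have sA: "\<And>k l. k \<notin> A \<or> l \<notin> A \<Longrightarrow> YA k l = 0" using RI_supp[OF pA] YA_def by simp
  have sB: "\<And>k l. k \<notin> B \<or> l \<notin> B \<Longrightarrow> YB k l = 0" using RI_supp[OF pB] YB_def by simp
  define TA where "TA = (\<lambda>a b. \<Sum>p\<in>A. \<Sum>n\<in>A. J a p * YA p n * J n b)"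
  define TB where "TB = (\<lambda>a b. \<Sum>p\<in>B. \<Sum>n\<in>B. J a p * YB p n * J n b)"
  have zz1: "\<forall>a\<in>A. \<forall>b\<in>B. J a b = 0" and zz2: "\<forall>a\<in>A. \<forall>b\<in>B. J b a = 0"
    using z1 z2 J_def A_def B_def by auto
  have R1: "RI K V1 = (\<lambda>a b. if a \<in> V1 \<and> b \<in> V1 then J a b - TB a b else 0)"
  proof -
    have "V - V1 = B" using V B_def by auto
    thus ?thesis using schur[OF pd, of V1] V unfolding J_def TB_def YB_def by auto
  qed
  have R2: "RI K V2 = (\<lambda>a b. if a \<in> V2 \<and> b \<in> V2 then J a b - TA a b else 0)"
  proof -
    have "V - V2 = A" using V A_def by auto
    thus ?thesis using schur[OF pd, of V2] V unfolding J_def TA_def YA_def by auto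
  qed
  have R0: "RI K (V1 \<inter> V2) = (\<lambda>a b. if a \<in> V1 \<inter> V2 \<and> b \<in> V1 \<inter> V2 then J a b - (TA a b + TB a b) else 0)"
  proof -
    have VAB: "V - V1 \<inter> V2 = A \<union> B" using V A_def B_def by auto
    have dis: "A \<inter> B = {}" using A_def B_def by auto
    have Y: "RI J (A \<union> B) = (\<lambda>a b. YA a b + YB a b)"
      using blockdiag[OF pAB dis zz1 zz2] YA_def YB_def by simp
    have T: "(\<Sum>p\<in>A \<union> B. \<Sum>n\<in>A \<union> B. J a p * (YA p n + YB p n) * J n b) = TA a b + TB a b" for a b
    proof -
      have "(\<Sum>p\<in>A \<union> B. \<Sum>n\<in>A \<union> B. J a p * (YA p n + YB p n) * J n b) =
         (\<Sum>p\<in>A \<union> B. \<Sum>n\<in>A \<union> B. J a p * YA p n * J n b) + (\<Sum>p\<in>A \<union> B. \<Sum>n\<in>A \<union> B. J a p * YB p n * J n b)"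
        by (simp add: distrib_left distrib_right sum.distrib)
      also have "(\<Sum>p\<in>A \<union> B. \<Sum>n\<in>A \<union> B. J a p * YA p n * J n b) = TA a b"
        unfolding TA_def by (rule sum_restrict2) (use sA in auto)
      also have "(\<Sum>p\<in>A \<union> B. \<Sum>n\<in>A \<union> B. J a p * YB p n * J n b) = TB a b"
        unfolding TB_def by (rule sum_restrict2) (use sB in auto)
      finally show ?thesis .
    qed
    show ?thesis using schur[OF pd, of "V1 \<inter> V2"] V unfolding VAB Y T J_def[symmetric] by auto
  qed
  have TB0: "TB a b = 0" if "a \<in> A \<or> b \<in> A" for a b
    unfolding TB_def using that zz1 zz2 by (auto intro!: sum.neutral)
  have TA0: "TA a b = 0" if "a \<in> B \<or> b \<in> B" for a b
    unfolding TA_def using that zz1 zz2 by (auto intro!: sum.neutral)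
  show "\<forall>a\<in>V. \<forall>b\<in>V. RI K V a b = RI K V1 a b + RI K V2 a b - RI K (V1 \<inter> V2) a b"
  proof (intro ballI)
    fix a b assume a: "a \<in> V" and b: "b \<in> V"
    show "RI K V a b = RI K V1 a b + RI K V2 a b - RI K (V1 \<inter> V2) a b"
      unfolding R1 R2 R0 J_def[symmetric]
      using a b V TA0[of a b] TB0[of a b] zz1 zz2 A_def B_def by auto
  qed
  show "\<forall>a\<in>V1. \<forall>b\<in>V1. \<not>(a \<in> V2 \<and> b \<in> V2) \<longrightarrow> RI K V1 a b = RI K V a b"
    unfolding R1 J_def[symmetric] using TB0 A_def by auto
  show "\<forall>a\<in>V2. \<forall>b\<in>V2. \<not>(a \<in> V1 \<and> b \<in> V1) \<longrightarrow> RI K V2 a b = RI K V a b"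
    unfolding R2 J_def[symmetric] using TA0 B_def by auto
qed



definition links :: "'a set \<Rightarrow> 'a set set \<Rightarrow> bool" where
  "links C F \<longleftrightarrow> (\<forall>e\<in>F. \<exists>c c'. e = {c, c'} \<and> c \<noteq> c' \<and> c \<in> C \<and> c' \<in> C)"

definition rip :: "'a set set \<Rightarrow> 'a set set set \<Rightarrow> bool" where
  "rip C F \<longleftrightarrow> (\<forall>v. \<forall>c\<in>C. \<forall>c'\<in>C. v \<in> c \<and> v \<in> c' \<longrightarrow> connected_in F {d\<in>C. v \<in> d} c c')"

lemma links_get: "links C F \<Longrightarrow> f \<in> F \<Longrightarrow> \<exists>c c'. f = {c, c'} \<and> c \<noteq> c' \<and> c \<in> C \<and> c' \<in> C"
  by (simp add: links_def)

lemma links_sub: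
  assumes "links C F" "F' \<subseteq> F" "\<forall>f\<in>F'. f \<subseteq> C'" shows "links C' F'"
  unfolding links_def
proof
  fix f assume f: "f \<in> F'"
  then have fF: "f \<in> F" using assms(2) by blast
  from links_get[OF assms(1) fF] obtain c c' where cc: "f = {c, c'}" "c \<noteq> c'" "c \<in> C" "c' \<in> C" by (elim exE conjE) (rule that, assumption+)
  have "c \<in> C'" "c' \<in> C'" using assms(3) f cc(1) by auto
  then have "f = {c, c'} \<and> c \<noteq> c' \<and> c \<in> C' \<and> c' \<in> C'" using cc by simp
  then show "\<exists>c c'. f = {c, c'} \<and> c \<noteq> c' \<and> c \<in> C' \<and> c' \<in> C'" by blast
qed

lemma forest_mono:
  assumes "is_forest F" "F' \<subseteq> F" shows "is_forest F'"
  unfolding is_forest_def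
proof (intro ballI allI impI notI)
  fix e x y assume e: "e \<in> F'" "e = {x, y}" and c: "connected_in (F' - {e}) UNIV x y"
  have "{(a, b). {a, b} \<in> F' - {e} \<and> a \<in> UNIV \<and> b \<in> UNIV} \<subseteq> {(a, b). {a, b} \<in> F - {e} \<and> a \<in> UNIV \<and> b \<in> UNIV}"
    using assms(2) by auto
  from rtrancl_mono[OF this] c have "connected_in (F - {e}) UNIV x y" unfolding connected_in_def by blast
  with assms(1) e assms(2) show False unfolding is_forest_def by blast
qed

lemma conn_step: "{y, z} \<in> G \<Longrightarrow> connected_in G UNIV a y \<Longrightarrow> connected_in G UNIV a z"
  unfolding connected_in_def by (erule rtrancl_into_rtrancl) auto

lemma conn_refl: "connected_in G N a a"
  unfolding connected_in_def by simp

lemma conn_empty: "connected_in {} N a b \<Longrightarrow> a = b"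
  unfolding connected_in_def by simp

lemma rip_sub:
  assumes rip: "rip C F" and e: "e = {c1, c2}"
    and C': "C' \<subseteq> C" and c1: "c1 \<in> C'" and c2: "c2 \<notin> C'"
    and cl: "\<forall>f\<in>F-{e}. \<forall>y z. f = {y, z} \<longrightarrow> (y \<in> C' \<longleftrightarrow> z \<in> C')"
  shows "rip C' {f\<in>F-{e}. f \<subseteq> C'}"
  unfolding rip_def
proof (intro allI ballI impI)
  fix v d d' assume d: "d \<in> C'" "d' \<in> C'" and v: "v \<in> d \<and> v \<in> d'"
  define N where "N = {x\<in>C. v \<in> x}"
  define N' where "N' = {x\<in>C'. v \<in> x}"
  define F' where "F' = {f\<in>F-{e}. f \<subseteq> C'}"
  define R where "R = {(x, y). {x, y} \<in> F \<and> x \<in> N \<and> y \<in> N}"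
  define R' where "R' = {(x, y). {x, y} \<in> F' \<and> x \<in> N' \<and> y \<in> N'}"
  have "(d, d') \<in> R\<^sup>*" using rip d v C' unfolding rip_def connected_in_def R_def N_def by blast
  have main: "(y \<in> C' \<and> (d, y) \<in> R'\<^sup>*) \<or> (y \<notin> C' \<and> (d, c1) \<in> R'\<^sup>*)" if "(d, y) \<in> R\<^sup>*" for y
    using that
  proof (induction rule: rtrancl_induct)
    case base thus ?case using d by simp
  next
    case (step y z)
    have yz: "{y, z} \<in> F" "y \<in> N" "z \<in> N" using step.hyps(2) by (auto simp: R_def)
    show ?case
    proof (cases "{y, z} = e")
      case True
      then have "(y = c1 \<and> z = c2) \<or> (y = c2 \<and> z = c1)" using e by (auto simp: doubleton_eq_iff)
      thus ?thesis using step.IH c1 c2 by auto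
    next
      case False
      then have ff: "{y, z} \<in> F - {e}" using yz by auto
      have iff: "y \<in> C' \<longleftrightarrow> z \<in> C'" using cl ff by blast
      show ?thesis
      proof (cases "y \<in> C'")
        case True
        then have zC: "z \<in> C'" using iff by simp
        have "(y, z) \<in> R'" using yz True zC ff unfolding R'_def F'_def N'_def N_def by auto
        thus ?thesis using step.IH True zC by auto
      next
        case False thus ?thesis using step.IH iff by auto
      qed
    qed
  qed
  from main[OF \<open>(d, d') \<in> R\<^sup>*\<close>] d have "(d, d') \<in> R'\<^sup>*" by auto
  thus "connected_in {f\<in>F-{e}. f \<subseteq> C'} {x\<in>C'. v \<in> x} d d'"
    unfolding connected_in_def R'_def F'_def N'_def by simp
qed

lemma cross_lemma:
  assumes "(d1, d2) \<in> {(x, y). {x, y} \<in> F \<and> x \<in> N \<and> y \<in> N}\<^sup>*" "d1 \<in> C1" "d2 \<notin> C1"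
    and e: "e = {c1, c2}"
    and clos: "\<forall>x y. {x, y} \<in> F - {e} \<longrightarrow> x \<in> C1 \<longrightarrow> y \<in> C1"
  shows "c1 \<in> N \<and> c2 \<in> N"
proof -
  have "y \<in> C1 \<or> (c1 \<in> N \<and> c2 \<in> N)" if "(d1, y) \<in> {(x, y). {x, y} \<in> F \<and> x \<in> N \<and> y \<in> N}\<^sup>*" for y
    using that
  proof (induction rule: rtrancl_induct)
    case base thus ?case using assms(2) by simp
  next
    case (step y z)
    have yz: "{y, z} \<in> F" "y \<in> N" "z \<in> N" using step.hyps(2) by auto
    show ?case
    proof (cases "{y, z} = e")
      case True
      then have "(y = c1 \<and> z = c2) \<or> (y = c2 \<and> z = c1)" using e by (auto simp: doubleton_eq_iff)
      thus ?thesis using yz by auto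
    next
      case False
      thus ?thesis using step.IH clos yz by auto
    qed
  qed
  from this[OF assms(1)] assms(3) show ?thesis by auto
qed

lemma sum_RI_zero:
  fixes K :: "'n::finite \<Rightarrow> 'n \<Rightarrow> real"
  assumes "pdon V K" "\<forall>e\<in>F. g e \<subseteq> V" "a \<notin> V \<or> b \<notin> V"
  shows "(\<Sum>e\<in>F. RI K (g e) a b) = 0"
proof (rule sum.neutral, rule ballI)
  fix e assume "e \<in> F"
  then have "g e \<subseteq> V" using assms(2) by blast
  then show "RI K (g e) a b = 0" using RI_supp[OF pdon_mono[OF assms(1)]] assms(3) by blast
qed

lemma rec_formula:
  fixes K :: "'n::finite \<Rightarrow> 'n \<Rightarrow> real" and C :: "'n set set"
  shows "card C = N \<Longrightarrow> links C F \<Longrightarrow> is_forest F \<Longrightarrow> rip C F \<Longrightarrow> pdon (\<Union>C) K \<Longrightarrow>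
    (\<forall>a\<in>\<Union>C. \<forall>b\<in>\<Union>C. a \<noteq> b \<and> \<not>(\<exists>c\<in>C. a \<in> c \<and> b \<in> c) \<longrightarrow> RI K (\<Union>C) a b = 0) \<Longrightarrow>
    \<forall>a\<in>\<Union>C. \<forall>b\<in>\<Union>C. RI K (\<Union>C) a b = (\<Sum>c\<in>C. RI K c a b) - (\<Sum>e\<in>F. RI K (\<Inter>e) a b)"
proof (induction N arbitrary: C F rule: less_induct)
  case (less N C F)
  have finC: "finite C" by simp
  have finF: "finite F" by simp
  note lk = less.prems(2) and fo = less.prems(3) and rp = less.prems(4) and pdV = less.prems(5)
    and pat = less.prems(6)
  show ?case
  proof (cases "card C \<ge> 2")
    case False
    then have "card C = 0 \<or> card C = 1" by linarith
    then show ?thesis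
    proof
      assume "card C = 0" then have "C = {}" using finC card_eq_0_iff by blast
      thus ?thesis by simp
    next
      assume "card C = 1" then obtain c where C: "C = {c}" using card_1_singletonE by blast
      have "F = {}" using lk C unfolding links_def by auto
      thus ?thesis using C by simp
    qed
  next
    case True
    obtain C1 C2 F1 F2 s where
      P1: "C1 \<union> C2 = C" "C1 \<inter> C2 = {}" "C1 \<noteq> {}" "C2 \<noteq> {}"
      and P2: "\<Union>C1 \<inter> \<Union>C2 = s"
      and P3: "\<forall>a\<in>s. \<forall>b\<in>s. \<exists>c\<in>C1. a \<in> c \<and> b \<in> c" "\<forall>a\<in>s. \<forall>b\<in>s. \<exists>c\<in>C2. a \<in> c \<and> b \<in> c"
      and P4: "\<And>a b. (\<Sum>e\<in>F. RI K (\<Inter>e) a b) = (\<Sum>e\<in>F1. RI K (\<Inter>e) a b) + (\<Sum>e\<in>F2. RI K (\<Inter>e) a b) + RI K s a b"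
      and P5: "links C1 F1" "is_forest F1" "rip C1 F1" "links C2 F2" "is_forest F2" "rip C2 F2"
    proof (cases "F = {}")
      case True
      have "C \<noteq> {}"
      proof
        assume "C = {}" then show False using \<open>card C \<ge> 2\<close> by simp
      qed
      then obtain c1 where c1: "c1 \<in> C" by blast
      have C2ne: "C - {c1} \<noteq> {}"
      proof
        assume "C - {c1} = {}" then have "C \<subseteq> {c1}" by auto
        then have "card C \<le> 1" using card_mono[of "{c1}" C] by simp
        thus False using \<open>card C \<ge> 2\<close> by simp
      qed
      have eq: "d = d'" if dd: "d \<in> C" "d' \<in> C" "v \<in> d" "v \<in> d'" for d d' v
      proof -
        have "connected_in F {x\<in>C. v \<in> x} d d'" using rp dd unfolding rip_def by blast
        then have "connected_in {} {x\<in>C. v \<in> x} d d'" using True by simp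
        then show ?thesis by (rule conn_empty)
      qed
      have P2': "\<Union>{c1} \<inter> \<Union>(C - {c1}) = {}"
      proof (rule ccontr)
        assume "\<Union>{c1} \<inter> \<Union>(C - {c1}) \<noteq> {}"
        then obtain v d where "v \<in> c1" "d \<in> C" "d \<noteq> c1" "v \<in> d" by blast
        then show False using eq[of c1 d v] c1 by simp
      qed
      have ripsub: "rip C' {}" if sub: "C' \<subseteq> C" for C'
        unfolding rip_def
      proof (intro allI ballI impI)
        fix v c c' assume cc: "c \<in> C'" "c' \<in> C'" "v \<in> c \<and> v \<in> c'"
        have "c \<in> C" "c' \<in> C" using cc sub by auto
        then have "c = c'" using eq[of c c' v] cc by simp
        then show "connected_in {} {d \<in> C'. v \<in> d} c c'" by (simp add: conn_refl)
      qed
      have "RI K {} a b = 0" for a b using RI_supp[OF pdon_mono[OF pdV]] by blast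
      then have P4': "(\<Sum>e\<in>F. RI K (\<Inter>e) a b) = (\<Sum>e\<in>{}. RI K (\<Inter>e) a b) + (\<Sum>e\<in>{}. RI K (\<Inter>e) a b) + RI K {} a b" for a b
        using True by simp
      have U: "{c1} \<union> (C - {c1}) = C" using c1 by auto
      have I: "{c1} \<inter> (C - {c1}) = {}" by auto
      have ne: "{c1} \<noteq> {}" by simp
      have s0: "\<forall>a\<in>{}. \<forall>b\<in>{}. \<exists>c\<in>C'. a \<in> c \<and> b \<in> c" for C' :: "'n set set" by simp
      have lk0: "links C' {}" for C' :: "'n set set" by (simp add: links_def)
      have fo0: "is_forest ({} :: 'n set set set)" by (simp add: is_forest_def)
      have r1: "rip {c1} {}" by (rule ripsub) (use c1 in simp)
      have r2: "rip (C - {c1}) {}" by (rule ripsub) auto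
      show thesis
        by (rule that[of "{c1}" "C - {c1}" "{}" "{}" "{}", OF U I ne C2ne P2' s0 s0 P4' lk0 fo0 r1 lk0 fo0 r2])
    next
      case False
      then obtain e where eF: "e \<in> F" by blast
      from links_get[OF lk eF] obtain c1 c2 where e: "e = {c1, c2}" "c1 \<noteq> c2" "c1 \<in> C" "c2 \<in> C"
        by (elim exE conjE) (rule that, assumption+)
      define C1 where "C1 = {d\<in>C. connected_in (F - {e}) UNIV c1 d}"
      define C2 where "C2 = C - C1"
      define F1 where "F1 = {f\<in>F-{e}. f \<subseteq> C1}"
      define F2 where "F2 = {f\<in>F-{e}. f \<subseteq> C2}"
      have c1C1: "c1 \<in> C1" using e by (simp add: C1_def conn_refl)
      have "\<not> connected_in (F - {e}) UNIV c1 c2" using fo[unfolded is_forest_def, rule_format, OF eF e(1)] .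
      then have c2C1: "c2 \<notin> C1" by (simp add: C1_def)
      have c2C2: "c2 \<in> C2" using c2C1 e by (simp add: C2_def)
      have c1C2: "c1 \<notin> C2" unfolding C2_def using c1C1 by blast
      have inC: "y \<in> C \<and> z \<in> C \<and> y \<noteq> z" if yzF: "{y, z} \<in> F" for y z
      proof -
        from links_get[OF lk yzF] obtain c c' where cc: "{y, z} = {c, c'}" "c \<noteq> c'" "c \<in> C" "c' \<in> C" by (elim exE conjE) (rule that, assumption+)
        then show ?thesis by (auto simp: doubleton_eq_iff)
      qed
      have clos: "y \<in> C1 \<longleftrightarrow> z \<in> C1" if "{y, z} \<in> F - {e}" for y z
      proof -
        have "{z, y} \<in> F - {e}" using that by (simp add: insert_commute)
        then show ?thesis using that inC[of y z] conn_step[of y z "F - {e}" c1] conn_step[of z y "F - {e}" c1]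
          unfolding C1_def by auto
      qed
      have P2': "\<Union>C1 \<inter> \<Union>C2 = c1 \<inter> c2"
      proof
        show "c1 \<inter> c2 \<subseteq> \<Union>C1 \<inter> \<Union>C2" using c1C1 c2C2 by blast
      next
        show "\<Union>C1 \<inter> \<Union>C2 \<subseteq> c1 \<inter> c2"
        proof
          fix v assume "v \<in> \<Union>C1 \<inter> \<Union>C2"
          then obtain d1 d2 where d: "d1 \<in> C1" "d2 \<in> C2" "v \<in> d1" "v \<in> d2" by blast
          have "d1 \<in> C" "d2 \<in> C" using d by (auto simp: C1_def C2_def)
          then have conn: "connected_in F {d\<in>C. v \<in> d} d1 d2" using rp d unfolding rip_def by blast
          have d2C1: "d2 \<notin> C1" using d by (simp add: C2_def)
          have closC: "\<forall>x y. {x, y} \<in> F - {e} \<longrightarrow> x \<in> C1 \<longrightarrow> y \<in> C1"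
          proof (intro allI impI)
            fix x y assume h: "{x, y} \<in> F - {e}" "x \<in> C1"
            then show "y \<in> C1" using clos[OF h(1)] by simp
          qed
          have "(d1, d2) \<in> {(x, y). {x, y} \<in> F \<and> x \<in> {d\<in>C. v \<in> d} \<and> y \<in> {d\<in>C. v \<in> d}}\<^sup>*"
            using conn unfolding connected_in_def .
          from cross_lemma[OF this d(1) d2C1 e(1) closC]
          have "c1 \<in> {d\<in>C. v \<in> d} \<and> c2 \<in> {d\<in>C. v \<in> d}" .
          thus "v \<in> c1 \<inter> c2" by simp
        qed
      qed
      have split: "F - {e} = F1 \<union> F2" "F1 \<inter> F2 = {}"
      proof -
        show "F - {e} = F1 \<union> F2"
        proof
          show "F - {e} \<subseteq> F1 \<union> F2"
          proof
            fix f assume f: "f \<in> F - {e}"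
            then have fF: "f \<in> F" by simp
            from links_get[OF lk fF] obtain y z where yz: "f = {y, z}" by (elim exE conjE) (rule that)
            have "y \<in> C \<and> z \<in> C" using inC f yz by blast
            thus "f \<in> F1 \<union> F2" using clos[of y z] f yz by (auto simp: F1_def F2_def C2_def)
          qed
        qed (auto simp: F1_def F2_def)
        show "F1 \<inter> F2 = {}"
        proof (rule ccontr)
          assume "F1 \<inter> F2 \<noteq> {}"
          then obtain f where "f \<in> F1" "f \<in> F2" by blast
          then have fF: "f \<in> F" unfolding F1_def by simp
          from links_get[OF lk fF] obtain y z where "f = {y, z}" by (elim exE conjE) (rule that)
          with \<open>f \<in> F1\<close> \<open>f \<in> F2\<close> show False by (auto simp: F1_def F2_def C2_def)
        qed
      qed
      have P4': "(\<Sum>e\<in>F. RI K (\<Inter>e) a b) = (\<Sum>e\<in>F1. RI K (\<Inter>e) a b) + (\<Sum>e\<in>F2. RI K (\<Inter>e) a b) + RI K (c1 \<inter> c2) a b" for a b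
      proof -
        have "(\<Sum>e\<in>F. RI K (\<Inter>e) a b) = RI K (\<Inter>e) a b + (\<Sum>e\<in>F - {e}. RI K (\<Inter>e) a b)"
          using eF finF by (simp add: sum.remove)
        also have "(\<Sum>e\<in>F - {e}. RI K (\<Inter>e) a b) = (\<Sum>e\<in>F1. RI K (\<Inter>e) a b) + (\<Sum>e\<in>F2. RI K (\<Inter>e) a b)"
          unfolding split(1) using split(2) by (simp add: sum.union_disjoint)
        finally show ?thesis using e(1) by simp
      qed
      have C1C: "C1 \<subseteq> C" by (auto simp: C1_def)
      have lk1: "links C1 F1" by (rule links_sub[OF lk]) (auto simp: F1_def)
      have lk2: "links C2 F2" by (rule links_sub[OF lk]) (auto simp: F2_def)
      have fo1: "is_forest F1" using forest_mono[OF fo] by (auto simp: F1_def)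
      have fo2: "is_forest F2" using forest_mono[OF fo] by (auto simp: F2_def)
      have rip1: "rip C1 F1" unfolding F1_def
      proof (rule rip_sub[OF rp e(1) C1C c1C1 c2C1], intro ballI allI impI)
        fix f y z assume "f \<in> F - {e}" "f = {y, z}"
        then have "{y, z} \<in> F - {e}" by simp
        then show "y \<in> C1 \<longleftrightarrow> z \<in> C1" by (rule clos)
      qed
      have rip2: "rip C2 F2" unfolding F2_def
      proof (rule rip_sub[OF rp _ _ c2C2 c1C2])
        show "e = {c2, c1}" using e(1) by (simp add: insert_commute)
        show "C2 \<subseteq> C" by (auto simp: C2_def)
        show "\<forall>f\<in>F - {e}. \<forall>y z. f = {y, z} \<longrightarrow> (y \<in> C2 \<longleftrightarrow> z \<in> C2)"
        proof (intro ballI allI impI)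
          fix f y z assume "f \<in> F - {e}" "f = {y, z}"
          then have h: "{y, z} \<in> F - {e}" by simp
          then have "{y, z} \<in> F" by simp
          then show "y \<in> C2 \<longleftrightarrow> z \<in> C2" using clos[OF h] inC[of y z] by (auto simp: C2_def)
        qed
      qed
      have U: "C1 \<union> C2 = C" using C1C by (auto simp: C2_def)
      have I: "C1 \<inter> C2 = {}" by (auto simp: C2_def)
      have ne: "C1 \<noteq> {}" "C2 \<noteq> {}" using c1C1 c2C2 by auto
      have s1: "\<forall>a\<in>c1 \<inter> c2. \<forall>b\<in>c1 \<inter> c2. \<exists>c\<in>C1. a \<in> c \<and> b \<in> c" using c1C1 by blast
      have s2: "\<forall>a\<in>c1 \<inter> c2. \<forall>b\<in>c1 \<inter> c2. \<exists>c\<in>C2. a \<in> c \<and> b \<in> c" using c2C2 by blast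
      show thesis
        by (rule that[of C1 C2 "c1 \<inter> c2" F1 F2, OF U I ne P2' s1 s2 P4' lk1 fo1 rip1 lk2 fo2 rip2])
    qed
    have V: "\<Union>C = \<Union>C1 \<union> \<Union>C2" using P1(1) by auto
    have ZZ: "RI K (\<Union>C) a b = 0 \<and> RI K (\<Union>C) b a = 0" if a: "a \<in> \<Union>C1-\<Union>C2" and b: "b \<in> \<Union>C2-\<Union>C1" for a b
    proof -
      have nab: "a \<noteq> b" "b \<noteq> a" using a b by auto
      have nc: "\<not>(\<exists>c\<in>C. a \<in> c \<and> b \<in> c)" "\<not>(\<exists>c\<in>C. b \<in> c \<and> a \<in> c)"
      proof -
        have "False" if "c \<in> C" "a \<in> c" "b \<in> c" for c
        proof -
          have "c \<in> C1 \<or> c \<in> C2" using that(1) P1(1) by auto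
          then show False using a b that(2,3) by auto
        qed
        then show "\<not>(\<exists>c\<in>C. a \<in> c \<and> b \<in> c)" "\<not>(\<exists>c\<in>C. b \<in> c \<and> a \<in> c)" by auto
      qed
      have aC: "a \<in> \<Union>C" "b \<in> \<Union>C" using a b V by auto
      have "a \<noteq> b \<and> \<not>(\<exists>c\<in>C. a \<in> c \<and> b \<in> c) \<longrightarrow> RI K (\<Union>C) a b = 0" using bspec[OF bspec[OF pat aC(1)] aC(2)] .
      then have "RI K (\<Union>C) a b = 0" using nab(1) nc(1) by simp
      moreover have "b \<noteq> a \<and> \<not>(\<exists>c\<in>C. b \<in> c \<and> a \<in> c) \<longrightarrow> RI K (\<Union>C) b a = 0" using bspec[OF bspec[OF pat aC(2)] aC(1)] .
      then have "RI K (\<Union>C) b a = 0" using nab(2) nc(2) by simp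
      ultimately show ?thesis by simp
    qed
    have Z: "\<forall>a\<in>\<Union>C1-\<Union>C2. \<forall>b\<in>\<Union>C2-\<Union>C1. RI K (\<Union>C) a b = 0"
      using ZZ by simp
    have Z2: "\<forall>a\<in>\<Union>C1-\<Union>C2. \<forall>b\<in>\<Union>C2-\<Union>C1. RI K (\<Union>C) b a = 0"
      using ZZ by simp
    note SF = split_formula[OF pdV V Z Z2]
    have card1: "card C1 < N" and card2: "card C2 < N"
      using P1 less.prems(1) finC by (auto intro!: psubset_card_mono)
    have pd1: "pdon (\<Union>C1) K" and pd2: "pdon (\<Union>C2) K" using pdon_mono[OF pdV] V by auto
    have pat1: "\<forall>a\<in>\<Union>C1. \<forall>b\<in>\<Union>C1. a \<noteq> b \<and> \<not>(\<exists>c\<in>C1. a \<in> c \<and> b \<in> c) \<longrightarrow> RI K (\<Union>C1) a b = 0"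
    proof (intro ballI impI)
      fix a b assume ab: "a \<in> \<Union>C1" "b \<in> \<Union>C1" and nc: "a \<noteq> b \<and> \<not>(\<exists>c\<in>C1. a \<in> c \<and> b \<in> c)"
      have n2: "\<not>(a \<in> \<Union>C2 \<and> b \<in> \<Union>C2)"
      proof
        assume "a \<in> \<Union>C2 \<and> b \<in> \<Union>C2"
        then have "a \<in> s" "b \<in> s" using ab P2 by auto
        then show False using P3(1) nc by blast
      qed
      then have "RI K (\<Union>C1) a b = RI K (\<Union>C) a b" using SF(2) ab by blast
      also have "\<dots> = 0"
      proof -
        have ncC: "\<not>(\<exists>c\<in>C. a \<in> c \<and> b \<in> c)"
        proof
          assume "\<exists>c\<in>C. a \<in> c \<and> b \<in> c"
          then obtain c where c: "c \<in> C" "a \<in> c" "b \<in> c" by blast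
          have "c \<in> C1 \<or> c \<in> C2" using c(1) P1(1) by auto
          then show False using c n2 nc by auto
        qed
        have ab': "a \<in> \<Union>C" "b \<in> \<Union>C" using ab V by auto
        have "a \<noteq> b \<and> \<not>(\<exists>c\<in>C. a \<in> c \<and> b \<in> c)" using ncC nc by simp
        then show ?thesis using bspec[OF bspec[OF pat ab'(1)] ab'(2)] by (rule mp[rotated])
      qed
      finally show "RI K (\<Union>C1) a b = 0" .
    qed
    have pat2: "\<forall>a\<in>\<Union>C2. \<forall>b\<in>\<Union>C2. a \<noteq> b \<and> \<not>(\<exists>c\<in>C2. a \<in> c \<and> b \<in> c) \<longrightarrow> RI K (\<Union>C2) a b = 0"
    proof (intro ballI impI)
      fix a b assume ab: "a \<in> \<Union>C2" "b \<in> \<Union>C2" and nc: "a \<noteq> b \<and> \<not>(\<exists>c\<in>C2. a \<in> c \<and> b \<in> c)"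
      have n2: "\<not>(a \<in> \<Union>C1 \<and> b \<in> \<Union>C1)"
      proof
        assume "a \<in> \<Union>C1 \<and> b \<in> \<Union>C1"
        then have "a \<in> s" "b \<in> s" using ab P2 by auto
        then show False using P3(2) nc by blast
      qed
      then have "RI K (\<Union>C2) a b = RI K (\<Union>C) a b" using SF(3) ab by blast
      also have "\<dots> = 0"
      proof -
        have ncC: "\<not>(\<exists>c\<in>C. a \<in> c \<and> b \<in> c)"
        proof
          assume "\<exists>c\<in>C. a \<in> c \<and> b \<in> c"
          then obtain c where c: "c \<in> C" "a \<in> c" "b \<in> c" by blast
          have "c \<in> C1 \<or> c \<in> C2" using c(1) P1(1) by auto
          then show False using c n2 nc by auto
        qed
        have ab': "a \<in> \<Union>C" "b \<in> \<Union>C" using ab V by auto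
        have "a \<noteq> b \<and> \<not>(\<exists>c\<in>C. a \<in> c \<and> b \<in> c)" using ncC nc by simp
        then show ?thesis using bspec[OF bspec[OF pat ab'(1)] ab'(2)] by (rule mp[rotated])
      qed
      finally show "RI K (\<Union>C2) a b = 0" .
    qed
    have IH1: "\<forall>a\<in>\<Union>C1. \<forall>b\<in>\<Union>C1. RI K (\<Union>C1) a b = (\<Sum>c\<in>C1. RI K c a b) - (\<Sum>e\<in>F1. RI K (\<Inter>e) a b)"
      using less.IH[OF card1 refl P5(1) P5(2) P5(3) pd1 pat1] .
    have IH2: "\<forall>a\<in>\<Union>C2. \<forall>b\<in>\<Union>C2. RI K (\<Union>C2) a b = (\<Sum>c\<in>C2. RI K c a b) - (\<Sum>e\<in>F2. RI K (\<Inter>e) a b)"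
      using less.IH[OF card2 refl P5(4) P5(5) P5(6) pd2 pat2] .
    have inter_sub: "\<Inter>e \<subseteq> \<Union>C'" if lkk: "links C' F'" "e \<in> F'" for C' :: "'n set set" and F' e
    proof -
      from links_get[OF lkk] obtain c c' where cc: "e = {c, c'}" "c \<in> C'" by (elim exE conjE) (rule that, assumption+)
      then show ?thesis by auto
    qed
    have E1: "RI K (\<Union>C1) a b = (\<Sum>c\<in>C1. RI K c a b) - (\<Sum>e\<in>F1. RI K (\<Inter>e) a b)" for a b
    proof (cases "a \<in> \<Union>C1 \<and> b \<in> \<Union>C1")
      case True thus ?thesis using IH1 by blast
    next
      case False
      have "(\<Sum>c\<in>C1. RI K c a b) = 0"
      proof (rule sum_RI_zero[OF pd1, where g = "\<lambda>c. c"])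
        show "\<forall>e\<in>C1. e \<subseteq> \<Union>C1" by blast
        show "a \<notin> \<Union>C1 \<or> b \<notin> \<Union>C1" using False by blast
      qed
      moreover have "(\<Sum>e\<in>F1. RI K (\<Inter>e) a b) = 0"
      proof (rule sum_RI_zero[OF pd1])
        show "\<forall>e\<in>F1. \<Inter>e \<subseteq> \<Union>C1" using inter_sub[OF P5(1)] by blast
        show "a \<notin> \<Union>C1 \<or> b \<notin> \<Union>C1" using False by blast
      qed
      moreover have "RI K (\<Union>C1) a b = 0"
        by (rule RI_supp[OF pd1]) (use False in blast)
      ultimately show ?thesis by simp
    qed
    have E2: "RI K (\<Union>C2) a b = (\<Sum>c\<in>C2. RI K c a b) - (\<Sum>e\<in>F2. RI K (\<Inter>e) a b)" for a b
    proof (cases "a \<in> \<Union>C2 \<and> b \<in> \<Union>C2")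
      case True thus ?thesis using IH2 by blast
    next
      case False
      have "(\<Sum>c\<in>C2. RI K c a b) = 0"
      proof (rule sum_RI_zero[OF pd2, where g = "\<lambda>c. c"])
        show "\<forall>e\<in>C2. e \<subseteq> \<Union>C2" by blast
        show "a \<notin> \<Union>C2 \<or> b \<notin> \<Union>C2" using False by blast
      qed
      moreover have "(\<Sum>e\<in>F2. RI K (\<Inter>e) a b) = 0"
      proof (rule sum_RI_zero[OF pd2])
        show "\<forall>e\<in>F2. \<Inter>e \<subseteq> \<Union>C2" using inter_sub[OF P5(4)] by blast
        show "a \<notin> \<Union>C2 \<or> b \<notin> \<Union>C2" using False by blast
      qed
      moreover have "RI K (\<Union>C2) a b = 0"
        by (rule RI_supp[OF pd2]) (use False in blast)
      ultimately show ?thesis by simp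
    qed
    have SC: "(\<Sum>c\<in>C. RI K c a b) = (\<Sum>c\<in>C1. RI K c a b) + (\<Sum>c\<in>C2. RI K c a b)" for a b
      unfolding P1(1)[symmetric] using P1(2) by (simp add: sum.union_disjoint)
    show ?thesis
    proof (intro ballI)
      fix a b assume a: "a \<in> \<Union>C" and b: "b \<in> \<Union>C"
      have "RI K (\<Union>C) a b = RI K (\<Union>C1) a b + RI K (\<Union>C2) a b - RI K s a b"
        using SF(1) a b unfolding P2 by blast
      also have "\<dots> = (\<Sum>c\<in>C. RI K c a b) - (\<Sum>e\<in>F. RI K (\<Inter>e) a b)"
        unfolding E1 E2 SC P4 by simp
      finally show "RI K (\<Union>C) a b = (\<Sum>c\<in>C. RI K c a b) - (\<Sum>e\<in>F. RI K (\<Inter>e) a b)" .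
    qed
  qed
qed



lemma mv_scaleR: "((c::real) *\<^sub>R (A::real^'n::finite^'m)) *v x = c *\<^sub>R (A *v x)"
  by (simp add: vec_eq_iff matrix_vector_mult_def sum_distrib_left mult.assoc)

lemma quad_form: "(x::real^'n) \<bullet> (J *v x) = (\<Sum>k\<in>UNIV. \<Sum>m\<in>UNIV. x$k * J$k$m * x$m)"
  by (simp add: inner_vec_def matrix_vector_mult_def sum_distrib_left mult.assoc)

lemma pos_def_pdon:
  fixes J :: "real^'n::finite^'n"
  assumes "pos_def J" shows "pdon UNIV (\<lambda>a b. J$a$b)"
  unfolding pdon_def
proof (intro allI impI)
  fix z :: "'n \<Rightarrow> real" assume nz: "\<exists>i. z i \<noteq> 0"
  define x :: "real^'n" where "x = (\<chi> i. z i)"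
  have "x \<noteq> 0" using nz by (auto simp: x_def vec_eq_iff)
  then have "x \<bullet> (J *v x) > 0" using assms unfolding pos_def_def by blast
  then show "(\<Sum>k\<in>UNIV. \<Sum>m\<in>UNIV. z k * J$k$m * z m) > 0" unfolding quad_form by (simp add: x_def)
qed

lemma pos_def_inj:
  fixes J :: "real^'n::finite^'n"
  assumes "pos_def J" shows "inj ((*v) J)"
proof (rule injI)
  fix x y assume "J *v x = J *v y"
  then have "J *v (x - y) = 0" by (simp add: matrix_vector_mult_diff_distrib)
  then have "(x - y) \<bullet> (J *v (x - y)) = 0" by simp
  then show "x = y" using assms unfolding pos_def_def by (metis less_irrefl right_minus_eq)
qed

lemma pos_def_inv:
  fixes J :: "real^'n::finite^'n"
  assumes "pos_def J" obtains B where "J ** B = mat 1" "B ** J = mat 1"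
proof -
  obtain B where "B ** J = mat 1" using pos_def_inj[OF assms] matrix_left_invertible_injective by blast
  moreover then have "J ** B = mat 1" using matrix_left_right_inverse by blast
  ultimately show ?thesis using that by blast
qed

lemma pos_def_det_nz:
  fixes J :: "real^'n::finite^'n"
  assumes "pos_def J" shows "det J \<noteq> 0"
proof -
  obtain B where "J ** B = mat 1" "B ** J = mat 1" using pos_def_inv[OF assms] by blast
  then have "invertible J" unfolding invertible_def by blast
  then show ?thesis using invertible_det_nz by blast
qed

lemma pos_def_bound:
  fixes J :: "real^'n::finite^'n"
  assumes pd: "pos_def J" shows "\<exists>l>0. \<forall>x. x \<bullet> (J *v x) \<ge> l * (x \<bullet> x)"
proof -
  define f where "f = (\<lambda>x::real^'n. x \<bullet> (J *v x))"
  have cont: "continuous_on (sphere 0 1) f" unfolding f_def by (intro continuous_intros)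
  obtain k :: 'n where True by blast
  have "axis k 1 \<in> sphere (0::real^'n) 1" by simp
  then have ne: "sphere (0::real^'n) 1 \<noteq> {}" by blast
  obtain x0 where x0: "x0 \<in> sphere 0 1" "\<forall>y\<in>sphere 0 1. f x0 \<le> f y"
    using continuous_attains_inf[OF compact_sphere ne cont] by blast
  have "x0 \<noteq> 0" using x0(1) by auto
  then have l: "f x0 > 0" using pd unfolding pos_def_def f_def by blast
  have "x \<bullet> (J *v x) \<ge> f x0 * (x \<bullet> x)" for x
  proof (cases "x = 0")
    case True thus ?thesis by simp
  next
    case False
    define c where "c = norm x"
    have c: "c > 0" using False by (simp add: c_def)
    define u where "u = (1 / c) *\<^sub>R x"
    have "u \<in> sphere 0 1" using c by (simp add: u_def c_def)
    then have "f x0 \<le> f u" using x0 by blast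
    also have "f u = (1 / c)^2 * (x \<bullet> (J *v x))"
      by (simp add: f_def u_def matrix_vector_mult_scaleR power2_eq_square)
    finally have "f x0 * c^2 \<le> x \<bullet> (J *v x)" using c by (simp add: field_simps)
    moreover have "c^2 = x \<bullet> x" by (simp add: c_def power2_norm_eq_inner)
    ultimately show ?thesis by simp
  qed
  then show ?thesis using l by blast
qed

lemma pos_def_det_pos:
  fixes J :: "real^'n::finite^'n"
  assumes pd: "pos_def J" shows "det J > 0"
proof (rule ccontr)
  assume "\<not> det J > 0"
  then have le: "det J \<le> 0" by simp
  define P where "P = (\<lambda>s::real. s *\<^sub>R (mat 1 :: real^'n^'n) + (1 - s) *\<^sub>R J)"
  have pdP: "pos_def (P s)" if "0 \<le> s" "s \<le> 1" for s
    unfolding pos_def_def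
  proof (intro allI impI)
    fix x :: "real^'n" assume "x \<noteq> 0"
    have "x \<bullet> (P s *v x) = s * (x \<bullet> x) + (1 - s) * (x \<bullet> (J *v x))"
      by (simp add: P_def mv_scaleR matrix_vector_mult_add_rdistrib inner_add_right)
    moreover have "x \<bullet> x > 0" using \<open>x \<noteq> 0\<close> by simp
    moreover have "x \<bullet> (J *v x) > 0" using pd \<open>x \<noteq> 0\<close> unfolding pos_def_def by blast
    ultimately show "x \<bullet> (P s *v x) > 0" using that
      by (cases "s = 0") (auto intro: add_pos_nonneg add_nonneg_pos mult_nonneg_nonneg)
  qed
  have cont: "continuous_on {0..1} (\<lambda>s. det (P s))"
    unfolding det_def P_def by (intro continuous_intros)
  have "P 0 = J" "P 1 = mat 1" by (simp_all add: P_def)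
  then obtain s where s: "0 \<le> s" "s \<le> 1" "det (P s) = 0"
    using IVT'[of "\<lambda>s. det (P s)" 0 0 1, OF _ _ _ cont] le by auto
  then show False using pos_def_det_nz[OF pdP[OF s(1,2)]] by simp
qed



lemma det_row_lin:
  fixes C :: "real^'n::finite^'n" and a b :: "real^'n"
  shows "det (\<chi> r. if r = k then a + t *s b else C$r) = det (\<chi> r. if r = k then a else C$r) + t * det (\<chi> r. if r = k then b else C$r)"
  using det_row_add[of k "\<lambda>_. a" "\<lambda>_. t *s b" "\<lambda>r. C$r"] det_row_mul[of k t "\<lambda>_. b" "\<lambda>r. C$r"] by simp

lemma det_row_replace:
  fixes A B :: "real^'n::finite^'n"
  assumes BA: "B ** A = mat 1"
  shows "det (\<chi> r. if r = i then (mat 1 :: real^'n^'n)$j else A$r) = B$j$i * det A"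
proof -
  have s: "(\<Sum>l\<in>UNIV. (B$j)$l *s A$l) = (mat 1 :: real^'n^'n)$j"
  proof -
    have "(\<Sum>l\<in>UNIV. (B$j)$l *s A$l) = (B ** A)$j"
      by (simp add: vec_eq_iff matrix_matrix_mult_def)
    thus ?thesis using BA by simp
  qed
  have r: "row r A = A$r" for r by (simp add: row_def vec_eq_iff)
  show ?thesis using cramer_lemma_transpose[of i "B$j" A] unfolding r s by simp
qed

lemma det_pert:
  fixes A B :: "real^'n::finite^'n"
  assumes BA: "B ** A = mat 1"
  shows "\<exists>g. \<forall>t. det (A + t *\<^sub>R (\<chi> a b. if (a = i \<and> b = j) \<or> (a = j \<and> b = i) then 1 else 0))
     = det A * (1 + t * (if i = j then B$i$i else B$j$i + B$i$j)) + t^2 * g"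
proof (cases "i = j")
  case True
  have eq: "A + t *\<^sub>R (\<chi> a b. if (a = i \<and> b = j) \<or> (a = j \<and> b = i) then 1 else 0)
      = (\<chi> r. if r = i then A$i + t *s (mat 1 :: real^'n^'n)$i else A$r)" for t
    using True by (auto simp: vec_eq_iff mat_def)
  have A: "(\<chi> r. if r = i then A$i else A$r) = A" by (simp add: vec_eq_iff)
  have "det (A + t *\<^sub>R (\<chi> a b. if (a = i \<and> b = j) \<or> (a = j \<and> b = i) then 1 else 0))
     = det A * (1 + t * (if i = j then B$i$i else B$j$i + B$i$j)) + t^2 * 0" for t
    unfolding eq det_row_lin A det_row_replace[OF BA] using True by (simp add: algebra_simps)
  then show ?thesis by blast
next
  case False
  define e where "e = (\<lambda>k. (mat 1 :: real^'n^'n)$k)"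
  define D where "D = (\<chi> r. if r = i then e j else A$r)"
  define g where "g = det (\<chi> r. if r = j then e i else D$r)"
  have main: "det (A + t *\<^sub>R (\<chi> a b. if (a = i \<and> b = j) \<or> (a = j \<and> b = i) then 1 else 0))
     = det A * (1 + t * (if i = j then B$i$i else B$j$i + B$i$j)) + t^2 * g" for t
  proof -
    define C1 where "C1 = (\<chi> r. if r = j then A$j + t *s e i else A$r)"
    have eq: "A + t *\<^sub>R (\<chi> a b. if (a = i \<and> b = j) \<or> (a = j \<and> b = i) then 1 else 0)
      = (\<chi> r. if r = i then A$i + t *s e j else C1$r)"
      using False by (auto simp: vec_eq_iff mat_def e_def C1_def)
    have e1: "(\<chi> r. if r = i then A$i else C1$r) = (\<chi> r. if r = j then A$j + t *s e i else A$r)"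
      using False by (auto simp: vec_eq_iff C1_def)
    have e2: "(\<chi> r. if r = i then e j else C1$r) = (\<chi> r. if r = j then A$j + t *s e i else D$r)"
      using False by (auto simp: vec_eq_iff C1_def D_def)
    have e3: "(\<chi> r. if r = j then A$j else A$r) = A" by (simp add: vec_eq_iff)
    have e4: "(\<chi> r. if r = j then A$j else D$r) = D" using False by (auto simp: vec_eq_iff D_def)
    have dA: "det (\<chi> r. if r = j then e i else A$r) = B$i$j * det A"
      unfolding e_def by (rule det_row_replace[OF BA])
    have dD: "det D = B$j$i * det A"
      unfolding e_def D_def by (rule det_row_replace[OF BA])
    show ?thesis
      unfolding eq det_row_lin e1 e2 e3 e4 dA dD g_def[symmetric] using False
      by (simp add: algebra_simps power2_eq_square)
  qed
  then show ?thesis by blast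
qed

lemma sum2_delta:
  fixes f :: "'n::finite \<Rightarrow> 'n \<Rightarrow> real"
  shows "(\<Sum>k\<in>UNIV. \<Sum>m\<in>UNIV. f k m * (if k = a \<and> m = b then 1 else 0)) = f a b"
proof -
  have "(\<Sum>m\<in>UNIV. f k m * (if k = a \<and> m = b then 1 else 0)) = (if k = a then f k b else 0)" for k
  proof -
    have "(\<Sum>m\<in>UNIV. f k m * (if k = a \<and> m = b then 1 else 0)) = (\<Sum>m\<in>UNIV. if m = b then (if k = a then f k m else 0) else 0)"
      by (rule sum.cong) auto
    also have "\<dots> = (if k = a then f k b else 0)" by simp
    finally show ?thesis .
  qed
  then show ?thesis by simp
qed

lemma hquad:
  fixes y :: "real^'n::finite"
  shows "y \<bullet> ((\<chi> a b. if (a = i \<and> b = j) \<or> (a = j \<and> b = i) then 1 else 0) *v y)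
     = (if i = j then y$i * y$i else 2 * y$i * y$j)"
proof (cases "i = j")
  case True
  have "y \<bullet> ((\<chi> a b. if (a = i \<and> b = j) \<or> (a = j \<and> b = i) then 1 else 0) *v y)
      = (\<Sum>k\<in>UNIV. \<Sum>m\<in>UNIV. (y$k * y$m) * (if k = i \<and> m = i then 1 else 0))"
    unfolding quad_form using True by (intro sum.cong refl) auto
  also have "\<dots> = y$i * y$i" by (rule sum2_delta)
  finally show ?thesis using True by simp
next
  case False
  have "y \<bullet> ((\<chi> a b. if (a = i \<and> b = j) \<or> (a = j \<and> b = i) then 1 else 0) *v y)
      = (\<Sum>k\<in>UNIV. \<Sum>m\<in>UNIV. (y$k * y$m) * (if k = i \<and> m = j then 1 else 0)
         + (y$k * y$m) * (if k = j \<and> m = i then 1 else 0))"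
    unfolding quad_form using False by (intro sum.cong refl) auto
  also have "\<dots> = (\<Sum>k\<in>UNIV. \<Sum>m\<in>UNIV. (y$k * y$m) * (if k = i \<and> m = j then 1 else 0))
         + (\<Sum>k\<in>UNIV. \<Sum>m\<in>UNIV. (y$k * y$m) * (if k = j \<and> m = i then 1 else 0))"
    by (simp add: sum.distrib)
  also have "\<dots> = y$i * y$j + y$j * y$i" unfolding sum2_delta by simp
  finally show ?thesis using False by simp
qed



lemma two_ab_le: "\<bar>2 * a * b\<bar> \<le> a * a + b * (b::real)"
proof -
  have h1: "0 \<le> (a - b) * (a - b)" by simp
  have h2: "0 \<le> (a + b) * (a + b)" by simp
  have "2 * a * b \<le> a * a + b * b" using h1 by (simp add: algebra_simps)
  moreover have "- (2 * a * b) \<le> a * a + b * b" using h2 by (simp add: algebra_simps)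
  ultimately show ?thesis by (simp add: abs_le_iff)
qed

lemma stationary:
  fixes \<nu> :: real and q :: nat and E :: "'n::finite \<Rightarrow> 'n \<Rightarrow> bool" and x :: "nat \<Rightarrow> real^'n"
    and \<mu>s :: "real^'n" and Js K :: "real^'n^'n"
  assumes nu: "\<nu> > 2" and q: "q \<ge> 1" and G: "simple_graph E"
    and adm: "admissible E Js"
    and mle: "\<And>\<mu> J. admissible E J \<Longrightarrow> loglik_t \<nu> q x \<mu> J \<le> loglik_t \<nu> q x \<mu>s Js"
    and KJ: "K ** Js = mat 1" and symK: "\<And>a b. K$a$b = K$b$a"
    and ij: "i = j \<or> E i j"
  shows "K$i$j = wcov \<nu> q x \<mu>s Js $ i $ j"
proof -
  define H :: "real^'n^'n" where "H = (\<chi> a b. if (a = i \<and> b = j) \<or> (a = j \<and> b = i) then 1 else 0)"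
  define p where "p = real CARD('n)"
  have pd: "pos_def Js" and symJ: "transpose Js = Js" and zer: "\<forall>a b. a \<noteq> b \<and> \<not> E a b \<longrightarrow> Js$a$b = 0"
    using adm unfolding admissible_def symmetric_mat_def by auto
  have Esym: "E a b \<Longrightarrow> E b a" for a b using G unfolding simple_graph_def by blast
  obtain l where l: "l > 0" "\<forall>y. y \<bullet> (Js *v y) \<ge> l * (y \<bullet> y)" using pos_def_bound[OF pd] by blast
  have Hbound: "\<bar>y \<bullet> (H *v y)\<bar> \<le> y \<bullet> y" for y :: "real^'n"
  proof -
    have yy: "y \<bullet> y = (\<Sum>k\<in>UNIV. y$k * y$k)" by (simp add: inner_vec_def)
    show ?thesis
    proof (cases "i = j")
      case True
      have "y$i * y$i \<le> (\<Sum>k\<in>UNIV. y$k * y$k)" by (rule member_le_sum) auto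
      thus ?thesis using True unfolding H_def hquad yy by simp
    next
      case False
      have "(\<Sum>k\<in>{i,j}. y$k * y$k) \<le> (\<Sum>k\<in>UNIV. y$k * y$k)" by (rule sum_mono2) auto
      moreover have "(\<Sum>k\<in>{i,j}. y$k * y$k) = y$i*y$i + y$j*y$j" using False by simp
      moreover have "\<bar>2 * y$i * y$j\<bar> \<le> y$i*y$i + y$j*y$j" by (rule two_ab_le)
      ultimately show ?thesis using False unfolding H_def hquad yy by simp
    qed
  qed
  have Jsym: "Js$a$b = Js$b$a" for a b using symJ by (metis transpose_def vec_lambda_beta)
  have admt: "admissible E (Js + t *\<^sub>R H)" if t: "\<bar>t\<bar> < l" for t
    unfolding admissible_def symmetric_mat_def pos_def_def
  proof (intro conjI allI impI)
    show "transpose (Js + t *\<^sub>R H) = Js + t *\<^sub>R H"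
      by (auto simp: vec_eq_iff transpose_def H_def Jsym)
  next
    fix y :: "real^'n" assume y0: "y \<noteq> 0"
    have "y \<bullet> ((Js + t *\<^sub>R H) *v y) = y \<bullet> (Js *v y) + t * (y \<bullet> (H *v y))"
      by (simp add: matrix_vector_mult_add_rdistrib mv_scaleR inner_add_right)
    moreover have "y \<bullet> (Js *v y) \<ge> l * (y \<bullet> y)" using l by blast
    moreover have "t * (y \<bullet> (H *v y)) \<ge> - (\<bar>t\<bar> * (y \<bullet> y))"
    proof -
      have "\<bar>t * (y \<bullet> (H *v y))\<bar> \<le> \<bar>t\<bar> * (y \<bullet> y)"
        unfolding abs_mult by (rule mult_left_mono[OF Hbound]) simp
      thus ?thesis by linarith
    qed
    moreover have "y \<bullet> y > 0" using y0 by simp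
    moreover have "(l - \<bar>t\<bar>) * (y \<bullet> y) > 0" using t \<open>y \<bullet> y > 0\<close> by (intro mult_pos_pos) auto
    moreover have "(l - \<bar>t\<bar>) * (y \<bullet> y) = l * (y \<bullet> y) - \<bar>t\<bar> * (y \<bullet> y)" by (simp add: algebra_simps)
    ultimately show "0 < y \<bullet> ((Js + t *\<^sub>R H) *v y)" by linarith
  next
    fix a b assume ab: "a \<noteq> b \<and> \<not> E a b"
    have "Js$a$b = 0" using zer ab by blast
    moreover have "H$a$b = 0"
    proof (rule ccontr)
      assume "H$a$b \<noteq> 0"
      then have "(a = i \<and> b = j) \<or> (a = j \<and> b = i)" by (simp add: H_def split: if_splits)
      then show False using ab ij Esym by auto
    qed
    ultimately show "(Js + t *\<^sub>R H)$a$b = 0" by simp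
  qed
  define \<alpha> where "\<alpha> = (if i = j then K$i$i else K$j$i + K$i$j)"
  obtain \<gamma> where \<gamma>: "\<And>t. det (Js + t *\<^sub>R H) = det Js * (1 + t * \<alpha>) + t^2 * \<gamma>"
    using det_pert[OF KJ, of i j] unfolding H_def[symmetric] \<alpha>_def by blast
  define y where "y = (\<lambda>s. x s - \<mu>s)"
  define d where "d = (\<lambda>s. mahal2 Js \<mu>s (x s))"
  define h where "h = (\<lambda>s. if i = j then y s $ i * y s $ i else 2 * y s $ i * y s $ j)"
  have mah: "mahal2 (Js + t *\<^sub>R H) \<mu>s (x s) = d s + t * h s" for t s
    unfolding mahal2_def d_def h_def y_def H_def[symmetric]
    by (simp add: matrix_vector_mult_add_rdistrib mv_scaleR inner_add_right hquad[of "x s - \<mu>s" i j, folded H_def])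
  have dnn: "d s \<ge> 0" for s
  proof (cases "x s - \<mu>s = 0")
    case True thus ?thesis by (simp add: d_def mahal2_def)
  next
    case False thus ?thesis using pd unfolding pos_def_def d_def mahal2_def by (simp add: less_imp_le)
  qed
  have detpos: "det Js > 0" using pos_def_det_pos[OF pd] .
  define c0 where "c0 = real q * ln (Gamma ((\<nu> + p) / 2) / ((\<nu> - 2) powr (p / 2) * pi powr (p / 2) * Gamma (\<nu> / 2)))"
  define g where "g = (\<lambda>t. c0 + real q / 2 * ln (det Js * (1 + t * \<alpha>) + t^2 * \<gamma>)
      - (\<nu> + p) / 2 * (\<Sum>s = 1..q. ln (1 + (d s + t * h s) / (\<nu> - 2))))"
  have geq: "loglik_t \<nu> q x \<mu>s (Js + t *\<^sub>R H) = g t" for t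
    unfolding loglik_t_def Let_def g_def c0_def p_def \<gamma> mah by simp
  have g0: "g 0 = loglik_t \<nu> q x \<mu>s Js" using geq[of 0] by simp
  have le: "\<forall>t. \<bar>0 - t\<bar> < l \<longrightarrow> g t \<le> g 0"
  proof (intro allI impI)
    fix t :: real assume "\<bar>0 - t\<bar> < l"
    then have "\<bar>t\<bar> < l" by simp
    from mle[OF admt[OF this], of \<mu>s] show "g t \<le> g 0" unfolding geq g0 .
  qed
  define D where "D = real q / 2 * (det Js * \<alpha> / det Js) - (\<nu> + p) / 2 * (\<Sum>s = 1..q. (h s / (\<nu> - 2)) / (1 + d s / (\<nu> - 2)))"
  have pos1: "1 + d s / (\<nu> - 2) > 0" for s
  proof -
    have "d s / (\<nu> - 2) \<ge> 0" using dnn[of s] nu by (intro divide_nonneg_pos) auto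
    then show ?thesis by linarith
  qed
  have dS: "((\<lambda>t. \<Sum>s = 1..q. ln (1 + (d s + t * h s) / (\<nu> - 2))) has_real_derivative
       (\<Sum>s = 1..q. (h s / (\<nu> - 2)) / (1 + d s / (\<nu> - 2)))) (at 0)"
  proof (rule DERIV_sum)
    fix s assume "s \<in> {1..q}"
    show "((\<lambda>t. ln (1 + (d s + t * h s) / (\<nu> - 2))) has_real_derivative (h s / (\<nu> - 2)) / (1 + d s / (\<nu> - 2))) (at 0)"
    proof -
      have f: "((\<lambda>t. 1 + (d s + t * h s) / (\<nu> - 2)) has_real_derivative (h s / (\<nu> - 2))) (at 0)"
      proof -
        have fe: "(\<lambda>t. 1 + (d s + t * h s) / (\<nu> - 2)) = (\<lambda>t. (1 + d s / (\<nu> - 2)) + t * (h s / (\<nu> - 2)))"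
        proof (rule ext)
          fix t
          show "1 + (d s + t * h s) / (\<nu> - 2) = (1 + d s / (\<nu> - 2)) + t * (h s / (\<nu> - 2))"
            by (simp add: add_divide_distrib)
        qed
        have "((\<lambda>t. (1 + d s / (\<nu> - 2)) + t * (h s / (\<nu> - 2))) has_real_derivative (h s / (\<nu> - 2))) (at 0)"
          using nu by (auto intro!: derivative_eq_intros)
        then show ?thesis unfolding fe .
      qed
      have "((\<lambda>t. ln (1 + (d s + t * h s) / (\<nu> - 2))) has_real_derivative
          (1 / (1 + (d s + 0 * h s) / (\<nu> - 2))) * (h s / (\<nu> - 2))) (at 0)"
        by (rule DERIV_chain2[OF DERIV_ln_divide f]) (use pos1[of s] in simp)
      then show ?thesis by (simp add: mult.commute)
    qed
  qed
  have dL: "((\<lambda>t. ln (det Js * (1 + t * \<alpha>) + t^2 * \<gamma>)) has_real_derivative (det Js * \<alpha> / det Js)) (at 0)"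
  proof -
    have f: "((\<lambda>t. det Js * (1 + t * \<alpha>) + t^2 * \<gamma>) has_real_derivative (det Js * \<alpha>)) (at 0)"
    proof -
      show ?thesis by (auto intro!: derivative_eq_intros)
    qed
    have "((\<lambda>t. ln (det Js * (1 + t * \<alpha>) + t^2 * \<gamma>)) has_real_derivative
        (1 / (det Js * (1 + 0 * \<alpha>) + 0^2 * \<gamma>)) * (det Js * \<alpha>)) (at 0)"
      by (rule DERIV_chain2[OF DERIV_ln_divide f]) (use detpos in simp)
    then show ?thesis by simp
  qed
  have dg: "(g has_real_derivative D) (at 0)"
  proof -
    have "((\<lambda>t. c0 + real q / 2 * ln (det Js * (1 + t * \<alpha>) + t^2 * \<gamma>)
      - (\<nu> + p) / 2 * (\<Sum>s = 1..q. ln (1 + (d s + t * h s) / (\<nu> - 2)))) has_real_derivative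
       (0 + real q / 2 * (det Js * \<alpha> / det Js) - (\<nu> + p) / 2 * (\<Sum>s = 1..q. (h s / (\<nu> - 2)) / (1 + d s / (\<nu> - 2))))) (at 0)"
      by (intro DERIV_diff DERIV_add DERIV_cmult DERIV_const dS dL)
    then show ?thesis unfolding g_def D_def by simp
  qed
  have D0: "D = 0" by (rule DERIV_local_max[OF dg l(1) le])
  have "\<alpha> = 2 * K$i$j \<or> (i = j \<and> \<alpha> = K$i$j)" using symK[of j i] by (auto simp: \<alpha>_def)
  have key: "real q * K$i$j = (\<nu> + p) * (\<Sum>s = 1..q. y s $ i * y s $ j / (\<nu> - 2 + d s))"
  proof -
    have t: "(h s / (\<nu> - 2)) / (1 + d s / (\<nu> - 2)) = h s / (\<nu> - 2 + d s)" for s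
    proof -
      have n: "\<nu> - 2 > 0" using nu by simp
      have e: "1 + d s / (\<nu> - 2) = (\<nu> - 2 + d s) / (\<nu> - 2)" using n by (simp add: field_simps)
      show ?thesis unfolding e using n by simp
    qed
    have "real q / 2 * \<alpha> = (\<nu> + p) / 2 * (\<Sum>s = 1..q. h s / (\<nu> - 2 + d s))"
      using D0 detpos unfolding D_def t by simp
    moreover have "\<alpha> = (if i = j then K$i$j else 2 * K$i$j)" using symK[of j i] by (auto simp: \<alpha>_def)
    moreover have "(\<Sum>s = 1..q. h s / (\<nu> - 2 + d s)) = (if i = j then 1 else 2) * (\<Sum>s = 1..q. y s $ i * y s $ j / (\<nu> - 2 + d s))"
      by (cases "i = j") (simp_all add: h_def sum_distrib_left mult.assoc)
    ultimately show ?thesis by (cases "i = j") (simp_all add: field_simps)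
  qed
  have w: "\<nu> / (\<nu> - 2) * t_weight \<nu> Js \<mu>s (x s) = (\<nu> + p) / (\<nu> - 2 + d s)" for s
  proof -
    have m: "\<nu> - 2 + d s \<noteq> 0" using nu dnn[of s] by simp
    have n: "\<nu> - 2 \<noteq> 0" "\<nu> \<noteq> 0" using nu by simp_all
    have tw: "t_weight \<nu> Js \<mu>s (x s) = (\<nu> + p) / (\<nu> + \<nu> / (\<nu> - 2) * d s)"
      by (simp add: t_weight_def d_def p_def)
    have den: "\<nu> + \<nu> / (\<nu> - 2) * d s = \<nu> * (\<nu> - 2 + d s) / (\<nu> - 2)"
      using n by (simp add: field_simps)
    have gen: "\<And>a b c v::real. a \<noteq> 0 \<Longrightarrow> b \<noteq> 0 \<Longrightarrow> v \<noteq> 0 \<Longrightarrow> v / a * (c / (v * b / a)) = c / b"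
      by (simp add: field_simps)
    show ?thesis unfolding tw den using gen[OF n(1) m n(2), of "\<nu> + p"] .
  qed
  have "wcov \<nu> q x \<mu>s Js $ i $ j = \<nu> / (\<nu> - 2) * (1 / real q) *
      (\<Sum>s = 1..q. t_weight \<nu> Js \<mu>s (x s) * (x s $ i - \<mu>s $ i) * (x s $ j - \<mu>s $ j))"
    by (simp add: wcov_def)
  also have "\<dots> = (1 / real q) * (\<nu> / (\<nu> - 2) * (\<Sum>s = 1..q. t_weight \<nu> Js \<mu>s (x s) * (x s $ i - \<mu>s $ i) * (x s $ j - \<mu>s $ j)))"
    by (simp only: mult_ac)
  also have "\<dots> = (1 / real q) * (\<Sum>s = 1..q. (\<nu> / (\<nu> - 2) * t_weight \<nu> Js \<mu>s (x s)) * (y s $ i * y s $ j))"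
    by (simp only: sum_distrib_left) (rule sum.cong, simp, simp add: y_def mult.assoc)
  also have "\<dots> = (1 / real q) * ((\<nu> + p) * (\<Sum>s = 1..q. y s $ i * y s $ j / (\<nu> - 2 + d s)))"
    unfolding w by (simp add: sum_distrib_left)
  also have "\<dots> = K$i$j" using key q by (simp add: field_simps)
  finally show ?thesis by simp
qed



lemma clique_in_max:
  fixes E :: "'n::finite \<Rightarrow> 'n \<Rightarrow> bool"
  assumes "is_clique E K" shows "\<exists>M\<in>max_cliques E. K \<subseteq> M"
proof -
  define S where "S = {K'. is_clique E K' \<and> K \<subseteq> K'}"
  have fin: "finite S" by simp
  have ne: "S \<noteq> {}" using assms S_def by blast
  have "Max (card ` S) \<in> card ` S" using fin ne by (intro Max_in) auto
  then obtain M where M: "M \<in> S" "card M = Max (card ` S)" by (metis imageE)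
  have "M \<in> max_cliques E"
    unfolding max_cliques_def
  proof (intro CollectI conjI allI impI)
    show "is_clique E M" using M S_def by simp
    fix K' assume K': "is_clique E K' \<and> M \<subseteq> K'"
    then have "K' \<in> S" using M S_def by auto
    then have "card K' \<le> card M" using M fin by simp
    then show "K' = M" using K' card_seteq[of K' M] by simp
  qed
  then show ?thesis using M S_def by auto
qed

lemma edge_in_clique:
  fixes E :: "'n::finite \<Rightarrow> 'n \<Rightarrow> bool"
  assumes G: "simple_graph E" and e: "E a b" shows "\<exists>c\<in>max_cliques E. a \<in> c \<and> b \<in> c"
proof -
  have eba: "E b a" using G e unfolding simple_graph_def by blast
  have "is_clique E {a, b}" unfolding is_clique_def
  proof (intro conjI ballI impI)
    show "{a, b} \<noteq> {}" by simp
    fix i j assume ij: "i \<in> {a, b}" "j \<in> {a, b}" "i \<noteq> j"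
    then have "(i = a \<and> j = b) \<or> (i = b \<and> j = a)" by blast
    then show "E i j"
    proof
      assume "i = a \<and> j = b" then show "E i j" using e by simp
    next
      assume "i = b \<and> j = a" then show "E i j" using eba by simp
    qed
  qed
  from clique_in_max[OF this] obtain M where M: "M \<in> max_cliques E" "{a, b} \<subseteq> M" by (elim bexE) (rule that)
  have "a \<in> M \<and> b \<in> M" using M(2) by simp
  with M(1) show ?thesis by (rule bexI[rotated])
qed

lemma vertex_in_clique:
  fixes E :: "'n::finite \<Rightarrow> 'n \<Rightarrow> bool"
  shows "\<exists>c\<in>max_cliques E. v \<in> c"
proof -
  have "is_clique E {v}" unfolding is_clique_def by auto
  from clique_in_max[OF this] obtain M where M: "M \<in> max_cliques E" "{v} \<subseteq> M" by (elim bexE) (rule that)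
  have "v \<in> M" using M(2) by simp
  with M(1) show ?thesis by (rule bexI[rotated])
qed

lemma restr_inv_cong:
  assumes "\<forall>k\<in>a. \<forall>l\<in>a. M$k$l = M'$k$l"
  shows "restr_inv M a = restr_inv M' a"
proof -
  have eq: "isinv a (\<lambda>k l. M$k$l) B \<longleftrightarrow> isinv a (\<lambda>k l. M'$k$l) B" for B
  proof -
    have "(\<Sum>m\<in>a. M$k$m * B m l) = (\<Sum>m\<in>a. M'$k$m * B m l)" if "k \<in> a" for k l
      by (rule sum.cong) (use assms that in auto)
    then show ?thesis unfolding isinv_def by auto
  qed
  have "RI (\<lambda>k l. M$k$l) a = RI (\<lambda>k l. M'$k$l) a" unfolding RI_def eq ..
  then show ?thesis by (intro ext) (simp add: restr_inv_RI)
qed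

theorem theorem4:
  fixes \<nu> :: real and q :: nat
    and E :: "'n::finite \<Rightarrow> 'n \<Rightarrow> bool"
    and F :: "'n set set set"
    and x :: "nat \<Rightarrow> real^'n"
    and \<mu>s :: "real^'n" and Js :: "real^'n^'n"
  assumes nu: "\<nu> > 2"
    and q: "q \<ge> 1"
    and G: "simple_graph E" "chordal E"
    and T: "clique_forest E F"
    and adm: "admissible E Js"
    and mle: "\<And>\<mu> J. admissible E J \<Longrightarrow> loglik_t \<nu> q x \<mu> J \<le> loglik_t \<nu> q x \<mu>s Js"
  shows "\<forall>i j.
     ((i = j \<or> (\<exists>c\<in>max_cliques E. i \<in> c \<and> j \<in> c)) \<longrightarrow>
        Js $ i $ j = (\<Sum>c\<in>max_cliques E. restr_inv (wcov \<nu> q x \<mu>s Js) c i j)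
                   - (\<Sum>e\<in>F. restr_inv (wcov \<nu> q x \<mu>s Js) (\<Inter> e) i j)) \<and>
     (\<not> (i = j \<or> (\<exists>c\<in>max_cliques E. i \<in> c \<and> j \<in> c)) \<longrightarrow> Js $ i $ j = 0)"
proof -
  have pd: "pos_def Js" and symJ: "transpose Js = Js" and zer: "\<forall>a b. a \<noteq> b \<and> \<not> E a b \<longrightarrow> Js$a$b = 0"
    using adm unfolding admissible_def symmetric_mat_def by auto
  obtain K where JK: "Js ** K = mat 1" "K ** Js = mat 1" using pos_def_inv[OF pd] by blast
  have tK: "transpose K = K"
  proof -
    have "transpose K ** Js = mat 1"
      using arg_cong[OF JK(1), of transpose] symJ by (simp add: matrix_transpose_mul transpose_mat)
    then have "transpose K = (transpose K ** Js) ** K"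
      by (metis JK(1) matrix_mul_assoc matrix_mul_rid)
    then show ?thesis using \<open>transpose K ** Js = mat 1\<close> by (simp add: matrix_mul_lid)
  qed
  have symK: "K$a$b = K$b$a" for a b using tK by (metis transpose_def vec_lambda_beta)
  have stat: "K$i$j = wcov \<nu> q x \<mu>s Js $ i $ j" if "i = j \<or> E i j" for i j
    using stationary[OF nu q G(1) adm mle JK(2) symK that] .
  define Kf where "Kf = (\<lambda>a b. K$a$b)"
  define Jf where "Jf = (\<lambda>a b. Js$a$b)"
  have pdJ: "pdon UNIV Jf" using pos_def_pdon[OF pd] Jf_def by simp
  have invJK: "isinv UNIV Jf Kf"
    unfolding isinv_def
  proof (intro conjI ballI allI impI)
    fix k l :: 'n
    have "(\<Sum>m\<in>UNIV. Jf k m * Kf m l) = (Js ** K)$k$l" by (simp add: Jf_def Kf_def matrix_matrix_mult_def)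
    then show "(\<Sum>m\<in>UNIV. Jf k m * Kf m l) = (if k = l then 1 else 0)" using JK(1) by (simp add: mat_def)
  qed auto
  have invKJ: "isinv UNIV Kf Jf"
    unfolding isinv_def
  proof (intro conjI ballI allI impI)
    fix k l :: 'n
    have "(\<Sum>m\<in>UNIV. Kf k m * Jf m l) = (K ** Js)$k$l" by (simp add: Jf_def Kf_def matrix_matrix_mult_def)
    then show "(\<Sum>m\<in>UNIV. Kf k m * Jf m l) = (if k = l then 1 else 0)" using JK(2) by (simp add: mat_def)
  qed auto
  have pdK: "pdon UNIV Kf" using pdon_inv[OF pdJ invJK] .
  have RIK: "RI Kf UNIV = Jf" using RI_eq[OF pdK invKJ] .
  define C where "C = max_cliques E"
  have UC: "\<Union>C = UNIV" using vertex_in_clique unfolding C_def by blast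
  have lk: "links C F" using T unfolding clique_forest_def links_def C_def by blast
  have fo: "is_forest F" using T unfolding clique_forest_def by blast
  have rp: "rip C F" using T unfolding clique_forest_def rip_def C_def by blast
  have common: "\<exists>c\<in>C. a \<in> c \<and> b \<in> c" if "E a b" for a b
    using edge_in_clique[OF G(1) that] unfolding C_def .
  have pat: "\<forall>a\<in>\<Union>C. \<forall>b\<in>\<Union>C. a \<noteq> b \<and> \<not>(\<exists>c\<in>C. a \<in> c \<and> b \<in> c) \<longrightarrow> RI Kf (\<Union>C) a b = 0"
  proof (intro ballI impI)
    fix a b assume ab: "a \<noteq> b \<and> \<not>(\<exists>c\<in>C. a \<in> c \<and> b \<in> c)"
    then have "\<not> E a b" using common by blast
    then have "Js$a$b = 0" using zer ab by blast
    then show "RI Kf (\<Union>C) a b = 0" unfolding UC RIK Jf_def .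
  qed
  have pdK': "pdon (\<Union>C) Kf" unfolding UC by (rule pdK)
  have R: "\<forall>a\<in>\<Union>C. \<forall>b\<in>\<Union>C. RI Kf (\<Union>C) a b = (\<Sum>c\<in>C. RI Kf c a b) - (\<Sum>e\<in>F. RI Kf (\<Inter>e) a b)"
    using rec_formula[OF refl lk fo rp pdK' pat] .
  have conv: "restr_inv (wcov \<nu> q x \<mu>s Js) W i j = RI Kf W i j" if W: "W \<subseteq> c0" "c0 \<in> C" for W c0 i j
  proof -
    have "restr_inv (wcov \<nu> q x \<mu>s Js) W = restr_inv K W"
    proof (rule restr_inv_cong, intro ballI)
      fix k l assume kl: "k \<in> W" "l \<in> W"
      have "k = l \<or> E k l"
      proof (cases "k = l")
        case False
        have "is_clique E c0" using W(2) unfolding C_def max_cliques_def by blast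
        then show ?thesis using False kl W(1) unfolding is_clique_def by blast
      qed simp
      then show "wcov \<nu> q x \<mu>s Js $ k $ l = K $ k $ l" using stat by simp
    qed
    moreover have "restr_inv K W i j = RI Kf W i j"
    proof -
      have pW: "pdon W Kf" using pdon_mono[OF pdK] by blast
      show ?thesis unfolding restr_inv_RI Kf_def[symmetric] using RI_supp[OF pW] by auto
    qed
    ultimately show ?thesis by simp
  qed
  have convC: "(\<Sum>c\<in>max_cliques E. restr_inv (wcov \<nu> q x \<mu>s Js) c i j) = (\<Sum>c\<in>C. RI Kf c i j)" for i j
    unfolding C_def[symmetric] by (rule sum.cong[OF refl]) (rule conv[OF subset_refl])
  have convF: "(\<Sum>e\<in>F. restr_inv (wcov \<nu> q x \<mu>s Js) (\<Inter> e) i j) = (\<Sum>e\<in>F. RI Kf (\<Inter>e) i j)" for i j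
  proof (rule sum.cong[OF refl])
    fix e assume eF: "e \<in> F"
    from links_get[OF lk eF] obtain c c' where cc: "e = {c, c'}" "c \<in> C" by (elim exE conjE) (rule that, assumption+)
    then have "\<Inter>e \<subseteq> c" by auto
    then show "restr_inv (wcov \<nu> q x \<mu>s Js) (\<Inter> e) i j = RI Kf (\<Inter>e) i j" by (rule conv[OF _ cc(2)])
  qed
  show ?thesis
  proof (intro allI conjI impI)
    fix i j
    have "Js $ i $ j = RI Kf (\<Union>C) i j" unfolding UC RIK Jf_def ..
    also have "\<dots> = (\<Sum>c\<in>C. RI Kf c i j) - (\<Sum>e\<in>F. RI Kf (\<Inter>e) i j)"
    proof -
      have ij: "i \<in> \<Union>C" "j \<in> \<Union>C" unfolding UC by simp_all
      show ?thesis by (rule bspec[OF bspec[OF R ij(1)] ij(2)])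
    qed
    finally show "Js $ i $ j = (\<Sum>c\<in>max_cliques E. restr_inv (wcov \<nu> q x \<mu>s Js) c i j)
                   - (\<Sum>e\<in>F. restr_inv (wcov \<nu> q x \<mu>s Js) (\<Inter> e) i j)" unfolding convC convF .
  next
    fix i j assume nc: "\<not> (i = j \<or> (\<exists>c\<in>max_cliques E. i \<in> c \<and> j \<in> c))"
    then have "\<not> E i j" using common unfolding C_def by blast
    then show "Js $ i $ j = 0" using zer nc by blast
  qed
qed

end
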